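(* Let $G$ be a group with a conjugation-closed generating set $X$ and let $g\in\mathrm{Mon}(X)$. The order complex $O_g$ of the interval $[1,g]$, with the orthoscheme metric, is isometric to the space $\mathrm{WFact}(G,g,\mathbf I)$ of weighted linear factorizations of $g$.
   Context: $\mathrm{Mon}(X)$ is the generated submonoid; $\ell(x)$ is the minimal length of a product of elements of $X$ equal to $x$; $x\le y$ if there is $x'\in\mathrm{Mon}(X)$ with $xx'=y$ and $\ell(x)+\ell(x')=\ell(y)$; $[1,g]=\{x:x\le g\}$, a bounded graded poset of height $n=\ell(g)$. $O_g$ is the order complex of $[1,g]$ (an ordered $k$-simplex for each chain $x_0<\cdots<x_k$), with the orthoscheme metric: each maximal simplex (maximal chain $x_0<\cdots<x_n$) is the standard orthoscheme $\{0\le y_1\le\cdots\le y_n\le1\}\subset\mathbb R^n$ with $x_i$ at the vertex whose last $i$ coordinates are $1$ and the others $0$. A linear factorization of $g$ is $[x_L\ x_1\cdots x_k\ x_R]$ with entries in $\mathrm{Mon}(X)$, $x_1,\dots,x_k\ne1$, lengths summing to $\ell(g)$, product $g$. A weighted linear factorization of $g$ is a function $\mathbf u\colon[0,1]\to G$, trivial at all but finitely many points, such that with $0<s_1<\dots<s_k<1$ the points of $(0,1)$ where $\mathbf u$ is nontrivial, $P(\mathbf u)=[\mathbf u(0)\ \mathbf u(s_1)\cdots\mathbf u(s_k)\ \mathbf u(1)]$ is a linear factorization of $g$. $\mathrm{WFact}(G,g,\mathbf I)$ is the set of these with the following metric. For $G=\mathbb Z$, $X=\{1\}$, a weighted linear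 factorization $\mathbf s$ of $n$ (values are nonnegative integers summing to $n$) is identified with the point of the standard orthoscheme $\{0\le y_1\le\cdots\le y_n\le1\}$ obtained by listing, in nondecreasing order, each $r\in[0,1]$ repeated $\mathbf s(r)$ times. For general $G$, the map $L(\mathbf u)=\ell\circ\mathbf u$ sends each cell $\{\mathbf u:P(\mathbf u)=\mathbf x\}$ bijectively onto the open face $\{\mathbf s:P(\mathbf s)=L(\mathbf x)\}$ of this orthoscheme (where $L([x_L\cdots x_R])=[\ell(x_L)\cdots\ell(x_R)]$); pulling back the Euclidean metric on each cell and taking closures makes $\mathrm{WFact}(G,g,\mathbf I)$ a piecewise-Euclidean complex, with the induced length metric. *)

theory Defs
  imports "HOL-Algebra.Generated_Groups" "HOL-Analysis.Analysis"
begin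

definition wprod :: "('a, 'b) monoid_scheme \<Rightarrow> 'a list \<Rightarrow> 'a" where
  "wprod G ws = foldr (\<lambda>a b. a \<otimes>\<^bsub>G\<^esub> b) ws \<one>\<^bsub>G\<^esub>"

definition Mon :: "('a, 'b) monoid_scheme \<Rightarrow> 'a set \<Rightarrow> 'a set" where
  "Mon G X = {wprod G ws | ws. ws \<in> lists X}"

definition wlen :: "('a, 'b) monoid_scheme \<Rightarrow> 'a set \<Rightarrow> 'a \<Rightarrow> nat" where
  "wlen G X x = (LEAST n. \<exists>ws \<in> lists X. length ws = n \<and> wprod G ws = x)"

definition pleq :: "('a, 'b) monoid_scheme \<Rightarrow> 'a set \<Rightarrow> 'a \<Rightarrow> 'a \<Rightarrow> bool" where
  "pleq G X x y \<longleftrightarrow> x \<in> Mon G X \<and> y \<in> Mon G X \<and>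
     (\<exists>x' \<in> Mon G X. x \<otimes>\<^bsub>G\<^esub> x' = y \<and> wlen G X x + wlen G X x' = wlen G X y)"

definition pless :: "('a, 'b) monoid_scheme \<Rightarrow> 'a set \<Rightarrow> 'a \<Rightarrow> 'a \<Rightarrow> bool" where
  "pless G X x y \<longleftrightarrow> pleq G X x y \<and> x \<noteq> y"

definition interval :: "('a, 'b) monoid_scheme \<Rightarrow> 'a set \<Rightarrow> 'a \<Rightarrow> 'a set" where
  "interval G X g = {x. pleq G X x g}"

definition intrinsic_dist ::
  "'c set \<Rightarrow> ('c \<Rightarrow> 'p set) \<Rightarrow> ('c \<Rightarrow> 'p \<Rightarrow> 'p \<Rightarrow> real) \<Rightarrow> 'p \<Rightarrow> 'p \<Rightarrow> real" where
  "intrinsic_dist K cell d p q = Inf {len. \<exists>ps cs.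
      length ps = Suc (length cs) \<and> ps ! 0 = p \<and> last ps = q \<and>
      (\<forall>i < length cs. cs ! i \<in> K \<and> ps ! i \<in> cell (cs ! i) \<and> ps ! Suc i \<in> cell (cs ! i)) \<and>
      len = (\<Sum>i < length cs. d (cs ! i) (ps ! i) (ps ! Suc i))}"

definition is_chain :: "('a, 'b) monoid_scheme \<Rightarrow> 'a set \<Rightarrow> 'a set \<Rightarrow> bool" where
  "is_chain G X C \<longleftrightarrow> (\<forall>x \<in> C. \<forall>y \<in> C. pleq G X x y \<or> pleq G X y x)"

definition max_chains :: "('a, 'b) monoid_scheme \<Rightarrow> 'a set \<Rightarrow> 'a \<Rightarrow> 'a set set" where
  "max_chains G X g = {C. C \<subseteq> interval G X g \<and> is_chain G X C \<and>
      (\<forall>D. D \<subseteq> interval G X g \<and> is_chain G X D \<and> C \<subseteq> D \<longrightarrow> D = C)}"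

definition osimplex :: "'a set \<Rightarrow> ('a \<Rightarrow> real) set" where
  "osimplex C = {lam. (\<forall>x. 0 \<le> lam x) \<and> (\<forall>x. x \<notin> C \<longrightarrow> lam x = 0) \<and> sum lam C = 1}"

definition O_points :: "('a, 'b) monoid_scheme \<Rightarrow> 'a set \<Rightarrow> 'a \<Rightarrow> ('a \<Rightarrow> real) set" where
  "O_points G X g = (\<Union>C \<in> max_chains G X g. osimplex C)"

definition chain_idx :: "('a, 'b) monoid_scheme \<Rightarrow> 'a set \<Rightarrow> 'a set \<Rightarrow> 'a \<Rightarrow> nat" where
  "chain_idx G X C x = card {y \<in> C. pless G X y x}"

text \<open>Orthoscheme coordinate y_j (1 \<le> j \<le> n) of the point with barycentric coordinates lam
  in the simplex of C: vertex x_i has its last i coordinates equal to 1, the others 0.\<close>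
definition ortho_coord ::
  "('a, 'b) monoid_scheme \<Rightarrow> 'a set \<Rightarrow> nat \<Rightarrow> 'a set \<Rightarrow> ('a \<Rightarrow> real) \<Rightarrow> nat \<Rightarrow> real" where
  "ortho_coord G X n C lam j = (\<Sum>x \<in> {x \<in> C. chain_idx G X C x \<ge> n + 1 - j}. lam x)"

definition O_cell_dist ::
  "('a, 'b) monoid_scheme \<Rightarrow> 'a set \<Rightarrow> 'a \<Rightarrow> 'a set \<Rightarrow> ('a \<Rightarrow> real) \<Rightarrow> ('a \<Rightarrow> real) \<Rightarrow> real" where
  "O_cell_dist G X g C lam mu =
     sqrt (\<Sum>j \<in> {1..wlen G X g}.
       (ortho_coord G X (wlen G X g) C lam j - ortho_coord G X (wlen G X g) C mu j)\<^sup>2)"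

definition O_dist ::
  "('a, 'b) monoid_scheme \<Rightarrow> 'a set \<Rightarrow> 'a \<Rightarrow> ('a \<Rightarrow> real) \<Rightarrow> ('a \<Rightarrow> real) \<Rightarrow> real" where
  "O_dist G X g = intrinsic_dist (max_chains G X g) osimplex (O_cell_dist G X g)"

text \<open>A linear factorization [x_L x_1 ... x_k x_R] as a list of length k+2.\<close>
definition lin_fact :: "('a, 'b) monoid_scheme \<Rightarrow> 'a set \<Rightarrow> 'a \<Rightarrow> 'a list \<Rightarrow> bool" where
  "lin_fact G X g xs \<longleftrightarrow> length xs \<ge> 2 \<and> set xs \<subseteq> Mon G X \<and>
     (\<forall>i. 0 < i \<and> i < length xs - 1 \<longrightarrow> xs ! i \<noteq> \<one>\<^bsub>G\<^esub>) \<and>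
     (\<Sum>x \<leftarrow> xs. wlen G X x) = wlen G X g \<and> wprod G xs = g"

text \<open>Functions u : [0,1] \<rightarrow> G are represented as functions real \<Rightarrow> 'a that are trivial
  outside [0,1].\<close>
definition wsupp :: "('a, 'b) monoid_scheme \<Rightarrow> (real \<Rightarrow> 'a) \<Rightarrow> real set" where
  "wsupp G u = {r. 0 < r \<and> r < 1 \<and> u r \<noteq> \<one>\<^bsub>G\<^esub>}"

definition Pfact :: "('a, 'b) monoid_scheme \<Rightarrow> (real \<Rightarrow> 'a) \<Rightarrow> 'a list" where
  "Pfact G u = [u 0] @ map u (sorted_list_of_set (wsupp G u)) @ [u 1]"

definition WFact :: "('a, 'b) monoid_scheme \<Rightarrow> 'a set \<Rightarrow> 'a \<Rightarrow> (real \<Rightarrow> 'a) set" where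
  "WFact G X g = {u. (\<forall>r. (r < 0 \<or> r > 1) \<longrightarrow> u r = \<one>\<^bsub>G\<^esub>) \<and> finite (wsupp G u) \<and>
      lin_fact G X g (Pfact G u)}"

definition Lmap :: "('a, 'b) monoid_scheme \<Rightarrow> 'a set \<Rightarrow> (real \<Rightarrow> 'a) \<Rightarrow> real \<Rightarrow> nat" where
  "Lmap G X u = (\<lambda>r. if 0 \<le> r \<and> r \<le> 1 then wlen G X (u r) else 0)"

text \<open>Point of the standard orthoscheme attached to a weighted linear factorization s of n in Z:
  each r \<in> [0,1] repeated s(r) times, in nondecreasing order.\<close>
definition ortho_point :: "(real \<Rightarrow> nat) \<Rightarrow> real list" where
  "ortho_point s = sort (concat (map (\<lambda>r. replicate (s r) r)
      (sorted_list_of_set {r. 0 \<le> r \<and> r \<le> 1 \<and> s r \<noteq> 0})))"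

definition eucl_list_dist :: "nat \<Rightarrow> real list \<Rightarrow> real list \<Rightarrow> real" where
  "eucl_list_dist n a b = sqrt (\<Sum>i < n. (a ! i - b ! i)\<^sup>2)"

text \<open>Closed cell of a linear factorization xs = [x_L x_1..x_k x_R]: the characteristic map
  sends 0 \<le> s_1 \<le> ... \<le> s_k \<le> 1 to the weighted factorization which at r is the ordered
  product of the x_i with s_i = r (with x_L prepended at 0 and x_R appended at 1).
  For 0 < s_1 < ... < s_k < 1 this is the open cell {u. P(u) = xs}.\<close>
definition char_map :: "('a, 'b) monoid_scheme \<Rightarrow> 'a list \<Rightarrow> (nat \<Rightarrow> real) \<Rightarrow> real \<Rightarrow> 'a" where
  "char_map G xs s r =
     (let k = length xs - 2;
          mid = wprod G (map (\<lambda>i. xs ! i) (filter (\<lambda>i. s i = r) [1..<k+1]))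
      in if r = 0 then xs ! 0 \<otimes>\<^bsub>G\<^esub> mid
         else if r = 1 then mid \<otimes>\<^bsub>G\<^esub> xs ! (k+1)
         else if 0 < r \<and> r < 1 then mid
         else \<one>\<^bsub>G\<^esub>)"

definition W_cell :: "('a, 'b) monoid_scheme \<Rightarrow> 'a list \<Rightarrow> (real \<Rightarrow> 'a) set" where
  "W_cell G xs = {char_map G xs s | s.
      (let k = length xs - 2 in
        (k > 0 \<longrightarrow> 0 \<le> s 1 \<and> s k \<le> 1) \<and> (\<forall>i. 1 \<le> i \<and> i < k \<longrightarrow> s i \<le> s (Suc i)))}"

definition W_cell_dist ::
  "('a, 'b) monoid_scheme \<Rightarrow> 'a set \<Rightarrow> 'a \<Rightarrow> 'a list \<Rightarrow> (real \<Rightarrow> 'a) \<Rightarrow> (real \<Rightarrow> 'a) \<Rightarrow> real" where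
  "W_cell_dist G X g xs u v =
     eucl_list_dist (wlen G X g) (ortho_point (Lmap G X u)) (ortho_point (Lmap G X v))"

definition W_dist ::
  "('a, 'b) monoid_scheme \<Rightarrow> 'a set \<Rightarrow> 'a \<Rightarrow> (real \<Rightarrow> 'a) \<Rightarrow> (real \<Rightarrow> 'a) \<Rightarrow> real" where
  "W_dist G X g = intrinsic_dist {xs. lin_fact G X g xs} (W_cell G) (W_cell_dist G X g)"

definition isometric_spaces :: "'p set \<Rightarrow> ('p \<Rightarrow> 'p \<Rightarrow> real) \<Rightarrow> 'q set \<Rightarrow> ('q \<Rightarrow> 'q \<Rightarrow> real) \<Rightarrow> bool" where
  "isometric_spaces A dA B dB \<longleftrightarrow>
     (\<exists>f. bij_betw f A B \<and> (\<forall>p \<in> A. \<forall>q \<in> A. dB (f p) (f q) = dA p q))"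

end

theory Submission
  imports Defs
begin

locale wsetup = group G for G (structure) +
  fixes X :: "'a set"
  assumes Xc: "X \<subseteq> carrier G"
begin

lemma wprod_Nil[simp]: "wprod G [] = \<one>" by (simp add: wprod_def)
lemma wprod_Cons[simp]: "wprod G (a # ws) = a \<otimes> wprod G ws" by (simp add: wprod_def)

lemma wprod_closed: "set ws \<subseteq> carrier G \<Longrightarrow> wprod G ws \<in> carrier G"
  by (induction ws) auto

lemma wprod_append: "set xs \<subseteq> carrier G \<Longrightarrow> set ys \<subseteq> carrier G \<Longrightarrow>
   wprod G (xs @ ys) = wprod G xs \<otimes> wprod G ys"
  by (induction xs) (auto simp: wprod_closed m_assoc)

lemma lists_X_carrier: "ws \<in> lists X \<Longrightarrow> set ws \<subseteq> carrier G"
  using Xc by auto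

lemma wprod_lists_closed: "ws \<in> lists X \<Longrightarrow> wprod G ws \<in> carrier G"
  using wprod_closed lists_X_carrier by blast

lemma wprod_append_X: "xs \<in> lists X \<Longrightarrow> ys \<in> lists X \<Longrightarrow>
   wprod G (xs @ ys) = wprod G xs \<otimes> wprod G ys"
  using wprod_append lists_X_carrier by blast

lemma wprod_single: "a \<in> carrier G \<Longrightarrow> wprod G [a] = a" by simp

lemma MonI: "ws \<in> lists X \<Longrightarrow> wprod G ws \<in> Mon G X"
  unfolding Mon_def by blast

lemma Mon_carrier: "x \<in> Mon G X \<Longrightarrow> x \<in> carrier G"
  unfolding Mon_def using wprod_lists_closed by blast

lemma one_Mon: "\<one> \<in> Mon G X"
  using MonI[of "[]"] by simp

lemma wlen_ex: assumes "x \<in> Mon G X"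
  shows "\<exists>ws \<in> lists X. length ws = wlen G X x \<and> wprod G ws = x"
proof -
  from assms obtain ws where "ws \<in> lists X" "wprod G ws = x" unfolding Mon_def by blast
  then have "\<exists>n. \<exists>ws \<in> lists X. length ws = n \<and> wprod G ws = x" by blast
  from LeastI_ex[OF this] show ?thesis unfolding wlen_def by blast
qed

lemma wlen_le: "ws \<in> lists X \<Longrightarrow> wlen G X (wprod G ws) \<le> length ws"
  unfolding wlen_def by (rule Least_le) blast

lemma Mon_mult: "x \<in> Mon G X \<Longrightarrow> y \<in> Mon G X \<Longrightarrow> x \<otimes> y \<in> Mon G X"
proof -
  assume "x \<in> Mon G X" "y \<in> Mon G X"
  then obtain xs ys where "xs \<in> lists X" "ys \<in> lists X" "x = wprod G xs" "y = wprod G ys"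
    unfolding Mon_def by blast
  then have "x \<otimes> y = wprod G (xs @ ys)" "xs @ ys \<in> lists X" using wprod_append_X by auto
  then show ?thesis using MonI by simp
qed

lemma wlen_mult: assumes "x \<in> Mon G X" "y \<in> Mon G X"
  shows "wlen G X (x \<otimes> y) \<le> wlen G X x + wlen G X y"
proof -
  obtain xs where xs: "xs \<in> lists X" "length xs = wlen G X x" "wprod G xs = x" using wlen_ex assms by blast
  obtain ys where ys: "ys \<in> lists X" "length ys = wlen G X y" "wprod G ys = y" using wlen_ex assms by blast
  have "x \<otimes> y = wprod G (xs @ ys)" using xs ys wprod_append_X by simp
  moreover have "wlen G X (wprod G (xs @ ys)) \<le> length (xs @ ys)" using xs ys wlen_le[of "xs @ ys"] by simp
  ultimately show ?thesis using xs ys by simp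
qed

lemma wlen_one[simp]: "wlen G X \<one> = 0"
  using wlen_le[of "[]"] by simp

lemma wlen_zero: assumes "x \<in> Mon G X" "wlen G X x = 0" shows "x = \<one>"
  using wlen_ex[OF assms(1)] assms(2) by auto

lemma wlen_one_letter: assumes "x \<in> Mon G X" "wlen G X x = 1" shows "x \<in> X"
proof -
  obtain ws where ws: "ws \<in> lists X" "length ws = 1" "wprod G ws = x" using wlen_ex assms by force
  then obtain a where "ws = [a]" by (cases ws) auto
  with ws Xc show ?thesis by auto
qed

definition geo :: "'a list \<Rightarrow> bool" where
  "geo ws \<longleftrightarrow> ws \<in> lists X \<and> wlen G X (wprod G ws) = length ws"

lemma geo_sub: assumes "geo (a @ b @ c)" shows "geo b"
proof -
  have l: "a \<in> lists X" "b \<in> lists X" "c \<in> lists X" using assms unfolding geo_def by auto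
  have "wprod G (a @ b @ c) = wprod G a \<otimes> (wprod G b \<otimes> wprod G c)"
    using l wprod_append_X by (simp)
  then have "length (a @ b @ c) \<le> wlen G X (wprod G a) + (wlen G X (wprod G b) + wlen G X (wprod G c))"
  proof -
    have m: "wprod G a \<in> Mon G X" "wprod G b \<in> Mon G X" "wprod G c \<in> Mon G X" using l MonI by auto
    have "length (a @ b @ c) = wlen G X (wprod G a \<otimes> (wprod G b \<otimes> wprod G c))"
      using assms \<open>wprod G (a @ b @ c) = _\<close> unfolding geo_def by simp
    also have "\<dots> \<le> wlen G X (wprod G a) + wlen G X (wprod G b \<otimes> wprod G c)"
      using wlen_mult m Mon_mult by blast
    also have "\<dots> \<le> wlen G X (wprod G a) + (wlen G X (wprod G b) + wlen G X (wprod G c))"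
      using wlen_mult m by simp
    finally show ?thesis .
  qed
  then have "length b \<le> wlen G X (wprod G b)"
    using wlen_le[OF l(1)] wlen_le[OF l(3)] by simp
  then show ?thesis using wlen_le[OF l(2)] l unfolding geo_def by simp
qed

lemma geo_prefix: "geo (a @ b) \<Longrightarrow> geo a" using geo_sub[of "[]" a b] by simp
lemma geo_suffix: "geo (a @ b) \<Longrightarrow> geo b" using geo_sub[of a b "[]"] by simp
lemma geo_take: "geo ws \<Longrightarrow> geo (take i ws)" using geo_prefix[of "take i ws" "drop i ws"] by simp
lemma geo_drop: "geo ws \<Longrightarrow> geo (drop i ws)" using geo_suffix[of "take i ws" "drop i ws"] by simp

lemma wlen_ex_geo: "x \<in> Mon G X \<Longrightarrow> \<exists>ws. geo ws \<and> wprod G ws = x \<and> length ws = wlen G X x"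
  using wlen_ex unfolding geo_def by fastforce

lemma pleq_Mon: "pleq G X x y \<Longrightarrow> x \<in> Mon G X \<and> y \<in> Mon G X"
  unfolding pleq_def by auto

lemma pleq_refl: "x \<in> Mon G X \<Longrightarrow> pleq G X x x"
  unfolding pleq_def using one_Mon Mon_carrier by force

lemma pleq_one: "x \<in> Mon G X \<Longrightarrow> pleq G X \<one> x"
  unfolding pleq_def using one_Mon Mon_carrier by force

lemma pleq_len: "pleq G X x y \<Longrightarrow> wlen G X x \<le> wlen G X y"
  unfolding pleq_def by auto

lemma pleq_eq: assumes "pleq G X x y" "wlen G X x = wlen G X y" shows "x = y"
proof -
  obtain x' where "x' \<in> Mon G X" "x \<otimes> x' = y" "wlen G X x + wlen G X x' = wlen G X y"
    using assms unfolding pleq_def by blast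
  then show ?thesis using assms wlen_zero Mon_carrier pleq_Mon by fastforce
qed

lemma pleq_trans: assumes "pleq G X x y" "pleq G X y z" shows "pleq G X x z"
proof -
  obtain x' where x': "x' \<in> Mon G X" "x \<otimes> x' = y" "wlen G X x + wlen G X x' = wlen G X y"
    using assms unfolding pleq_def by blast
  obtain y' where y': "y' \<in> Mon G X" "y \<otimes> y' = z" "wlen G X y + wlen G X y' = wlen G X z"
    using assms unfolding pleq_def by blast
  have xM: "x \<in> Mon G X" "z \<in> Mon G X" using assms pleq_Mon by auto
  have "x \<otimes> (x' \<otimes> y') = (x \<otimes> x') \<otimes> y'"
    using Mon_carrier xM x'(1) y'(1) by (simp add: m_assoc)
  then have e: "x \<otimes> (x' \<otimes> y') = z" using x'(2) y'(2) by simp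
  have "wlen G X z \<le> wlen G X x + wlen G X (x' \<otimes> y')"
    using wlen_mult[OF xM(1) Mon_mult[OF x'(1) y'(1)]] e by simp
  moreover have "wlen G X (x' \<otimes> y') \<le> wlen G X x' + wlen G X y'" using wlen_mult x' y' by blast
  ultimately have "wlen G X x + wlen G X (x' \<otimes> y') = wlen G X z" using x' y' by linarith
  then show ?thesis unfolding pleq_def using xM e Mon_mult x' y' by blast
qed

end

locale wsetup_g = wsetup +
  fixes g assumes gM: "g \<in> Mon G X"
begin

abbreviation "n \<equiv> wlen G X g"

definition Words :: "'a list set" where
  "Words = {w. geo w \<and> wprod G w = g}"

definition xc :: "'a list \<Rightarrow> nat \<Rightarrow> 'a" where
  "xc w i = wprod G (take i w)"

definition Cw :: "'a list \<Rightarrow> 'a set" where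
  "Cw w = xc w ` {0..n}"

lemma Words_len: "w \<in> Words \<Longrightarrow> length w = n"
  unfolding Words_def geo_def by auto

lemma Words_lists: "w \<in> Words \<Longrightarrow> w \<in> lists X"
  unfolding Words_def geo_def by auto

lemma Words_geo: "w \<in> Words \<Longrightarrow> geo w"
  unfolding Words_def by simp

lemma Words_prod: "w \<in> Words \<Longrightarrow> wprod G w = g"
  unfolding Words_def by simp

lemma xc_len: assumes "w \<in> Words" "i \<le> n" shows "wlen G X (xc w i) = i"
proof -
  have "geo (take i w)" using geo_take Words_geo assms(1) by blast
  then have "wlen G X (xc w i) = length (take i w)" unfolding xc_def geo_def by simp
  also have "\<dots> = i" using Words_len[OF assms(1)] assms(2) by simp
  finally show ?thesis .
qed

lemma xc_Mon: "w \<in> Words \<Longrightarrow> xc w i \<in> Mon G X"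
proof -
  assume "w \<in> Words"
  then have "take i w \<in> lists X" using Words_lists by (auto dest: in_set_takeD)
  then show ?thesis unfolding xc_def by (rule MonI)
qed

lemma xc_carrier: "w \<in> Words \<Longrightarrow> xc w i \<in> carrier G"
  using xc_Mon Mon_carrier by blast

lemma xc_0[simp]: "xc w 0 = \<one>" unfolding xc_def by simp

lemma xc_n: "w \<in> Words \<Longrightarrow> xc w n = g"
  unfolding xc_def using Words_len[of w] Words_prod[of w] by simp

lemma xc_mono: assumes w: "w \<in> Words" and ij: "i \<le> j" "j \<le> n"
  shows "pleq G X (xc w i) (xc w j)"
proof -
  define m where "m = take (j - i) (drop i w)"
  have tj: "take j w = take i w @ m" unfolding m_def using ij take_add[of i "j - i" w] by simp
  have "w = take i w @ m @ drop j w"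
    using tj append_take_drop_id[of j w] by simp
  then have gm: "geo m" using geo_sub[of "take i w" m "drop j w"] Words_geo[OF w] by simp
  have wl: "w \<in> lists X" using Words_lists w by simp
  have ml: "m \<in> lists X" using gm unfolding geo_def by simp
  have tl: "take i w \<in> lists X" using wl by (auto dest: in_set_takeD)
  have "xc w j = xc w i \<otimes> wprod G m" unfolding xc_def tj using wprod_append_X tl ml by simp
  moreover have "wlen G X (wprod G m) = length m" using gm unfolding geo_def by simp
  moreover have "length m = j - i" using ij Words_len[OF w] unfolding m_def by simp
  ultimately have "wprod G m \<in> Mon G X \<and> xc w i \<otimes> wprod G m = xc w j \<and>
      wlen G X (xc w i) + wlen G X (wprod G m) = wlen G X (xc w j)"
    using MonI[OF ml] xc_len[OF w, of i] xc_len[OF w, of j] ij by simp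
  then show ?thesis unfolding pleq_def using xc_Mon[OF w] by blast
qed

lemma xc_inj: "w \<in> Words \<Longrightarrow> inj_on (xc w) {0..n}"
proof -
  assume w: "w \<in> Words"
  show ?thesis
  proof (rule inj_onI)
    fix a b assume ab: "a \<in> {0..n}" "b \<in> {0..n}" "xc w a = xc w b"
    have "a = wlen G X (xc w a)" using xc_len[OF w, of a] ab(1) by simp
    also have "\<dots> = wlen G X (xc w b)" using ab(3) by simp
    also have "\<dots> = b" using xc_len[OF w, of b] ab(2) by simp
    finally show "a = b" .
  qed
qed

lemma interval_len: "y \<in> interval G X g \<Longrightarrow> wlen G X y \<le> n"
  unfolding interval_def using pleq_len by auto

lemma Cw_sub: "w \<in> Words \<Longrightarrow> y \<in> Cw w \<longleftrightarrow> (\<exists>i\<le>n. y = xc w i)"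
  unfolding Cw_def by auto

lemma Cw_max: assumes w: "w \<in> Words" shows "Cw w \<in> max_chains G X g"
proof -
  have sub: "Cw w \<subseteq> interval G X g"
  proof
    fix y assume "y \<in> Cw w"
    then obtain i where i: "i \<le> n" "y = xc w i" using Cw_sub[OF w] by blast
    have "pleq G X (xc w i) (xc w n)" using xc_mono[OF w i(1)] by simp
    then show "y \<in> interval G X g" unfolding interval_def using i xc_n[OF w] by simp
  qed
  have ch: "is_chain G X (Cw w)"
    unfolding is_chain_def
  proof (intro ballI)
    fix x y assume "x \<in> Cw w" "y \<in> Cw w"
    then obtain i j where ij: "i \<le> n" "x = xc w i" "j \<le> n" "y = xc w j" using Cw_sub[OF w] by blast
    show "pleq G X x y \<or> pleq G X y x"
    proof (cases "i \<le> j")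
      case True then show ?thesis using xc_mono[OF w True ij(3)] ij by simp
    next
      case False then show ?thesis using xc_mono[OF w _ ij(1), of j] ij by simp
    qed
  qed
  have mx: "D = Cw w" if D: "D \<subseteq> interval G X g" "is_chain G X D" "Cw w \<subseteq> D" for D
  proof
    show "D \<subseteq> Cw w"
    proof
      fix y assume y: "y \<in> D"
      define j where "j = wlen G X y"
      have jn: "j \<le> n" using y D(1) interval_len j_def by blast
      have xj: "xc w j \<in> D" using D(3) jn Cw_sub[OF w] by blast
      have lj: "wlen G X (xc w j) = j" using xc_len[OF w jn] .
      have ll: "wlen G X y = wlen G X (xc w j)" using lj j_def by simp
      have "pleq G X y (xc w j) \<or> pleq G X (xc w j) y" using D(2) y xj unfolding is_chain_def by blast
      then have "y = xc w j"
      proof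
        assume "pleq G X y (xc w j)" from pleq_eq[OF this ll] show ?thesis .
      next
        assume "pleq G X (xc w j) y" from pleq_eq[OF this ll[symmetric]] show ?thesis by (rule sym)
      qed
      then show "y \<in> Cw w" using jn Cw_sub[OF w] by blast
    qed
  next
    show "Cw w \<subseteq> D" using D(3) .
  qed
  show ?thesis unfolding max_chains_def using sub ch mx by blast
qed

lemma xc_pless: assumes w: "w \<in> Words" and kn: "k \<le> n" and iN: "i \<le> n"
  shows "pless G X (xc w k) (xc w i) \<longleftrightarrow> k < i"
proof
  assume a: "pless G X (xc w k) (xc w i)"
  then have "wlen G X (xc w k) \<le> wlen G X (xc w i)" unfolding pless_def using pleq_len by blast
  then have "k \<le> i" using xc_len[OF w kn] xc_len[OF w iN] by simp
  moreover have "k \<noteq> i" using a unfolding pless_def by blast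
  ultimately show "k < i" by simp
next
  assume ki: "k < i"
  have "xc w k \<noteq> xc w i"
  proof
    assume "xc w k = xc w i"
    then have "wlen G X (xc w k) = wlen G X (xc w i)" by simp
    then show False using xc_len[OF w kn] xc_len[OF w iN] ki by simp
  qed
  moreover have "pleq G X (xc w k) (xc w i)" using xc_mono[OF w _ iN, of k] ki by simp
  ultimately show "pless G X (xc w k) (xc w i)" unfolding pless_def by simp
qed

lemma chain_idx_xc: assumes w: "w \<in> Words" and i: "i \<le> n"
  shows "chain_idx G X (Cw w) (xc w i) = i"
proof -
  have "{y \<in> Cw w. pless G X y (xc w i)} = xc w ` {0..<i}"
  proof (intro equalityI subsetI)
    fix y assume "y \<in> {y \<in> Cw w. pless G X y (xc w i)}"
    then obtain k where k: "k \<le> n" "y = xc w k" "pless G X y (xc w i)" using Cw_sub[OF w] by blast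
    then have "k < i" using xc_pless[OF w k(1) i] by simp
    then show "y \<in> xc w ` {0..<i}" using k by simp
  next
    fix y assume "y \<in> xc w ` {0..<i}"
    then obtain k where k: "k < i" "y = xc w k" by auto
    then have "pless G X y (xc w i)" using xc_pless[OF w _ i, of k] i by simp
    moreover have "y \<in> Cw w" unfolding Cw_def using k i by (intro image_eqI[of _ _ k]) auto
    ultimately show "y \<in> {y \<in> Cw w. pless G X y (xc w i)}" by simp
  qed
  moreover have "inj_on (xc w) {0..<i}"
    by (rule inj_on_subset[OF xc_inj[OF w]]) (use i in auto)
  ultimately show ?thesis unfolding chain_idx_def by (simp add: card_image)
qed

end

context wsetup_g
begin

lemma interval_Mon: "x \<in> interval G X g \<Longrightarrow> x \<in> Mon G X"
  unfolding interval_def using pleq_Mon by blast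

lemma one_interval: "\<one> \<in> interval G X g"
  unfolding interval_def using pleq_one[OF gM] by simp

lemma g_interval: "g \<in> interval G X g"
  unfolding interval_def using pleq_refl[OF gM] by simp

lemma maxc_props: assumes "C \<in> max_chains G X g"
  shows "C \<subseteq> interval G X g" "is_chain G X C"
    "\<And>m. m \<in> interval G X g \<Longrightarrow> (\<forall>x\<in>C. pleq G X x m \<or> pleq G X m x) \<Longrightarrow> m \<in> C"
proof -
  show C: "C \<subseteq> interval G X g" "is_chain G X C" using assms unfolding max_chains_def by auto
  fix m assume m: "m \<in> interval G X g" "\<forall>x\<in>C. pleq G X x m \<or> pleq G X m x"
  have "is_chain G X (insert m C)" using C(2) m(2) pleq_refl interval_Mon[OF m(1)]
    unfolding is_chain_def by blast
  moreover have "insert m C \<subseteq> interval G X g" using C m by blast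
  ultimately have "insert m C = C" using assms unfolding max_chains_def by blast
  then show "m \<in> C" by blast
qed

lemma maxc_uniq: assumes "C \<in> max_chains G X g" "x \<in> C" "y \<in> C" "wlen G X x = wlen G X y"
  shows "x = y"
proof -
  have "pleq G X x y \<or> pleq G X y x" using maxc_props(2)[OF assms(1)] assms(2,3) unfolding is_chain_def by blast
  then show ?thesis
  proof
    assume "pleq G X x y" from pleq_eq[OF this assms(4)] show ?thesis .
  next
    assume "pleq G X y x" from pleq_eq[OF this assms(4)[symmetric]] show ?thesis by (rule sym)
  qed
qed

lemma maxc_le: assumes "C \<in> max_chains G X g" "x \<in> C" "y \<in> C" "wlen G X x \<le> wlen G X y"
  shows "pleq G X x y"
proof -
  have "pleq G X x y \<or> pleq G X y x" using maxc_props(2)[OF assms(1)] assms(2,3) unfolding is_chain_def by blast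
  then show ?thesis
  proof
    assume yx: "pleq G X y x"
    then have "wlen G X y = wlen G X x" using pleq_len[OF yx] assms(4) by simp
    then have "y = x" using pleq_eq[OF yx] by simp
    then show ?thesis using yx by simp
  qed
qed

lemma maxc_one: assumes "C \<in> max_chains G X g" shows "\<one> \<in> C"
proof -
  have "\<forall>x\<in>C. pleq G X x \<one> \<or> pleq G X \<one> x"
    using maxc_props(1)[OF assms] interval_Mon pleq_one by blast
  then show ?thesis using maxc_props(3)[OF assms one_interval] by blast
qed

lemma maxc_g: assumes "C \<in> max_chains G X g" shows "g \<in> C"
proof -
  have "\<forall>x\<in>C. pleq G X x g \<or> pleq G X g x"
    using maxc_props(1)[OF assms] unfolding interval_def by blast
  then show ?thesis using maxc_props(3)[OF assms g_interval] by blast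
qed

lemma split_step:
  assumes yz: "pleq G X y z" and j: "wlen G X y \<le> j" "j \<le> wlen G X z"
  shows "\<exists>m. pleq G X y m \<and> pleq G X m z \<and> wlen G X m = j"
proof -
  obtain y' where y': "y' \<in> Mon G X" "y \<otimes> y' = z" "wlen G X y + wlen G X y' = wlen G X z"
    using yz unfolding pleq_def by blast
  have yM: "y \<in> Mon G X" "z \<in> Mon G X" using yz pleq_Mon by auto
  obtain v where v: "geo v" "wprod G v = y'" "length v = wlen G X y'" using wlen_ex_geo[OF y'(1)] by blast
  define v1 where "v1 = take (j - wlen G X y) v"
  define v2 where "v2 = drop (j - wlen G X y) v"
  have g1: "geo v1" unfolding v1_def using geo_take[OF v(1)] .
  have g2: "geo v2" unfolding v2_def using geo_drop[OF v(1)] .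
  have l1: "wlen G X (wprod G v1) = j - wlen G X y" using g1 v(3) y'(3) j unfolding geo_def v1_def by simp
  have l2: "wlen G X (wprod G v2) = wlen G X z - j" using g2 v(3) y'(3) j unfolding geo_def v2_def by simp
  have M1: "wprod G v1 \<in> Mon G X" "wprod G v2 \<in> Mon G X" using g1 g2 MonI unfolding geo_def by auto
  have vv: "v = v1 @ v2" unfolding v1_def v2_def by simp
  have yv: "y' = wprod G v1 \<otimes> wprod G v2" using v(2) vv wprod_append_X g1 g2 unfolding geo_def by simp
  define m where "m = y \<otimes> wprod G v1"
  have mM: "m \<in> Mon G X" unfolding m_def using Mon_mult yM M1 by blast
  have zm: "m \<otimes> wprod G v2 = z" unfolding m_def using y'(2) yv yM M1 Mon_carrier by (simp add: m_assoc)
  have "wlen G X m \<le> wlen G X y + (j - wlen G X y)" unfolding m_def using wlen_mult[OF yM(1) M1(1)] l1 by simp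
  then have le: "wlen G X m \<le> j" using j by simp
  have "wlen G X z \<le> wlen G X m + (wlen G X z - j)" using wlen_mult[OF mM M1(2)] zm l2 by simp
  then have ge: "j \<le> wlen G X m" using j by simp
  have mj: "wlen G X m = j" using le ge by simp
  have "pleq G X y m" unfolding pleq_def using yM mM M1 l1 mj j unfolding m_def by auto
  moreover have "pleq G X m z" unfolding pleq_def using yM mM M1 l2 mj j zm by auto
  ultimately show ?thesis using mj by blast
qed

lemma maxc_level: assumes C: "C \<in> max_chains G X g" and jn: "j \<le> n"
  shows "\<exists>x\<in>C. wlen G X x = j"
proof (rule ccontr)
  assume nj: "\<not> (\<exists>x\<in>C. wlen G X x = j)"
  have lenC: "wlen G X x \<le> n" if "x \<in> C" for x using that maxc_props(1)[OF C] interval_len by blast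
  define P where "P = (\<lambda>k. k < j \<and> (\<exists>x\<in>C. wlen G X x = k))"
  define Q where "Q = (\<lambda>k. j < k \<and> (\<exists>x\<in>C. wlen G X x = k))"
  have j0: "j \<noteq> 0" using nj maxc_one[OF C] by force
  have jn': "j \<noteq> n" using nj maxc_g[OF C] by force
  have P0: "P 0" unfolding P_def using j0 maxc_one[OF C] by force
  have Qn: "Q n" unfolding Q_def using jn jn' maxc_g[OF C] by force
  define a where "a = (GREATEST k. P k)"
  define b where "b = (LEAST k. Q k)"
  have Pa: "P a" unfolding a_def using P0 by (rule GreatestI_nat[where b = j]) (simp add: P_def)
  have Pmax: "k \<le> a" if "P k" for k unfolding a_def using that by (rule Greatest_le_nat[where b = j]) (simp add: P_def)
  have Qb: "Q b" unfolding b_def using Qn by (rule LeastI)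
  have Qmin: "b \<le> k" if "Q k" for k unfolding b_def using that by (rule Least_le)
  obtain y where y: "y \<in> C" "wlen G X y = a" using Pa unfolding P_def by blast
  obtain z where z: "z \<in> C" "wlen G X z = b" using Qb unfolding Q_def by blast
  have aj: "a < j" using Pa unfolding P_def by simp
  have jb: "j < b" using Qb unfolding Q_def by simp
  have yz: "pleq G X y z" using maxc_le[OF C y(1) z(1)] y z aj jb by simp
  obtain m where m: "pleq G X y m" "pleq G X m z" "wlen G X m = j"
    using split_step[OF yz, of j] y z aj jb by auto
  have zg: "pleq G X z g" using maxc_props(1)[OF C] z(1) unfolding interval_def by blast
  have mI: "m \<in> interval G X g" unfolding interval_def using pleq_trans[OF m(2) zg] by simp
  have "\<forall>x\<in>C. pleq G X x m \<or> pleq G X m x"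
  proof
    fix x assume x: "x \<in> C"
    have "wlen G X x \<noteq> j" using nj x by blast
    then consider "wlen G X x < j" | "wlen G X x > j" by linarith
    then show "pleq G X x m \<or> pleq G X m x"
    proof cases
      case 1
      then have "P (wlen G X x)" unfolding P_def using x by blast
      then have "wlen G X x \<le> wlen G X y" using Pmax y by simp
      then have "pleq G X x y" using maxc_le[OF C x y(1)] by simp
      then show ?thesis using pleq_trans[OF _ m(1)] by blast
    next
      case 2
      then have "Q (wlen G X x)" unfolding Q_def using x by blast
      then have "wlen G X z \<le> wlen G X x" using Qmin z by simp
      then have "pleq G X z x" using maxc_le[OF C z(1) x] by simp
      then show ?thesis using pleq_trans[OF m(2)] by blast
    qed
  qed
  then have "m \<in> C" using maxc_props(3)[OF C mI] by blast
  then show False using nj m(3) by blast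
qed

lemma maxc_Cw: assumes C: "C \<in> max_chains G X g"
  shows "\<exists>w\<in>Words. C = Cw w"
proof -
  define c where "c = (\<lambda>j. THE x. x \<in> C \<and> wlen G X x = j)"
  have c: "c j \<in> C \<and> wlen G X (c j) = j" if "j \<le> n" for j
  proof -
    have jn: "j \<le> n" by (rule that)
    obtain x where x: "x \<in> C" "wlen G X x = j" using maxc_level[OF C jn] by blast
    have "(THE x. x \<in> C \<and> wlen G X x = j) = x"
      by (rule the_equality) (use x maxc_uniq[OF C] in auto)
    then show ?thesis unfolding c_def using x by simp
  qed
  have lenC: "wlen G X x \<le> n" if "x \<in> C" for x using that maxc_props(1)[OF C] interval_len by blast
  have cx: "x = c (wlen G X x)" if "x \<in> C" for x
    using maxc_uniq[OF C that, of "c (wlen G X x)"] c[OF lenC[OF that]] by simp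
  have cn: "c n = g" using maxc_uniq[OF C _ maxc_g[OF C], of "c n"] c[of n] by simp
  have step: "\<exists>a. a \<in> X \<and> c j \<otimes> a = c (Suc j)" if "j < n" for j
  proof -
    have "pleq G X (c j) (c (Suc j))" using maxc_le[OF C] c[of j] c[of "Suc j"] that by simp
    then obtain y' where y': "y' \<in> Mon G X" "c j \<otimes> y' = c (Suc j)" "wlen G X (c j) + wlen G X y' = wlen G X (c (Suc j))"
      unfolding pleq_def by blast
    have "wlen G X y' = 1" using y'(3) c[of j] c[of "Suc j"] that by simp
    then have "y' \<in> X" using wlen_one_letter y'(1) by blast
    then show ?thesis using y'(2) by blast
  qed
  define a where "a = (\<lambda>j. SOME a. a \<in> X \<and> c j \<otimes> a = c (Suc j))"
  have a: "a j \<in> X \<and> c j \<otimes> a j = c (Suc j)" if "j < n" for j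
    unfolding a_def using someI_ex[OF step[OF that]] .
  define w where "w = map a [0..<n]"
  have wl: "w \<in> lists X" unfolding w_def using a by auto
  have wlen: "length w = n" unfolding w_def by simp
  have pre: "wprod G (take j w) = c j" if "j \<le> n" for j
    using that
  proof (induction j)
    case 0
    then show ?case using c[of 0] maxc_uniq[OF C _ maxc_one[OF C], of "c 0"] by simp
  next
    case (Suc j)
    have tk: "take (Suc j) w = take j w @ [a j]" unfolding w_def using Suc.prems
      by (simp add: take_Suc_conv_app_nth)
    have tl: "take j w \<in> lists X" using wl by (auto dest: in_set_takeD)
    have "wprod G (take (Suc j) w) = wprod G (take j w) \<otimes> wprod G [a j]"
      unfolding tk using wprod_append_X[OF tl] a[of j] Suc.prems by simp
    also have "\<dots> = c j \<otimes> a j" using Suc a[of j] Xc by auto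
    also have "\<dots> = c (Suc j)" using a[of j] Suc.prems by simp
    finally show ?case .
  qed
  have wg: "wprod G w = g" using pre[of n] wlen cn by simp
  have wW: "w \<in> Words" unfolding Words_def geo_def using wl wlen wg by simp
  have "Cw w = c ` {0..n}" unfolding Cw_def xc_def using pre by auto
  also have "\<dots> = C"
  proof (intro equalityI subsetI)
    fix x assume "x \<in> c ` {0..n}" then show "x \<in> C" using c by auto
  next
    fix x assume x: "x \<in> C" then show "x \<in> c ` {0..n}" using cx[OF x] lenC[OF x] by (intro image_eqI) auto
  qed
  finally show ?thesis using wW by blast
qed

end

context wsetup_g
begin

definition TS :: "real list set" where
  "TS = {ts. length ts = n \<and> sorted ts \<and> (\<forall>t\<in>set ts. 0 \<le> t \<and> t \<le> 1)}"

definition Tf :: "real list \<Rightarrow> nat \<Rightarrow> real" where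
  "Tf ts i = (if i = 0 then 0 else if i \<le> n then ts ! (i - 1) else 1)"

definition PO :: "'a list \<Rightarrow> real list \<Rightarrow> 'a \<Rightarrow> real" where
  "PO w ts = (\<lambda>x. \<Sum>i \<in> {i \<in> {0..n}. xc w i = x}. Tf ts (Suc i) - Tf ts i)"

lemma Tf_0[simp]: "Tf ts 0 = 0" unfolding Tf_def by simp
lemma Tf_Sn[simp]: "Tf ts (Suc n) = 1" unfolding Tf_def by simp

lemma TS_nth: assumes "ts \<in> TS" "i < n" shows "0 \<le> ts ! i" "ts ! i \<le> 1"
  using assms unfolding TS_def by (auto simp: nth_mem)

lemma TS_mono: assumes "ts \<in> TS" "i \<le> j" "j < n" shows "ts ! i \<le> ts ! j"
  using assms unfolding TS_def by (auto simp: sorted_iff_nth_mono)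

lemma Tf_mono: assumes ts: "ts \<in> TS" and "i \<le> n" shows "Tf ts i \<le> Tf ts (Suc i)"
proof (cases "i = 0")
  case True
  then show ?thesis unfolding Tf_def using TS_nth[OF ts, of 0] by auto
next
  case False
  show ?thesis
  proof (cases "i = n")
    case True then show ?thesis unfolding Tf_def using TS_nth[OF ts, of "n - 1"] False by auto
  next
    case nn: False
    then show ?thesis unfolding Tf_def using TS_mono[OF ts, of "i - 1" i] False assms(2) by auto
  qed
qed

lemma Tf_range: assumes ts: "ts \<in> TS" shows "0 \<le> Tf ts i" "Tf ts i \<le> 1"
  unfolding Tf_def using TS_nth[OF ts, of "i - 1"] by auto

lemma PO_xc: assumes w: "w \<in> Words" and i: "i \<le> n"
  shows "PO w ts (xc w i) = Tf ts (Suc i) - Tf ts i"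
proof -
  have "{k \<in> {0..n}. xc w k = xc w i} = {i}"
  proof (intro equalityI subsetI)
    fix k assume "k \<in> {k \<in> {0..n}. xc w k = xc w i}"
    then show "k \<in> {i}" using inj_onD[OF xc_inj[OF w], of k i] i by auto
  qed (use i in auto)
  then show ?thesis unfolding PO_def by simp
qed

lemma PO_out: assumes "x \<notin> Cw w" shows "PO w ts x = 0"
proof -
  have e: "{k \<in> {0..n}. xc w k = x} = {}" using assms unfolding Cw_def by auto
  show ?thesis unfolding PO_def e by simp
qed

lemma PO_nonneg: assumes "ts \<in> TS" shows "0 \<le> PO w ts x"
  unfolding PO_def using Tf_mono[OF assms] by (intro sum_nonneg) auto

lemma sum_Cw: assumes w: "w \<in> Words"
  shows "sum f (Cw w) = (\<Sum>i\<in>{0..n}. f (xc w i))"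
  unfolding Cw_def using sum.reindex[OF xc_inj[OF w], of f] by simp

lemma tele: "(\<Sum>i\<in>{0..n}. Tf ts (Suc i) - Tf ts i) = 1"
  using sum_Suc_diff[of 0 n "Tf ts"] by simp

lemma PO_osimplex: assumes w: "w \<in> Words" and ts: "ts \<in> TS"
  shows "PO w ts \<in> osimplex (Cw w)"
proof -
  have "sum (PO w ts) (Cw w) = (\<Sum>i\<in>{0..n}. PO w ts (xc w i))" using sum_Cw[OF w] .
  also have "\<dots> = (\<Sum>i\<in>{0..n}. Tf ts (Suc i) - Tf ts i)" using PO_xc[OF w] by simp
  also have "\<dots> = 1" by (rule tele)
  finally show ?thesis unfolding osimplex_def using PO_nonneg[OF ts] PO_out by blast
qed

lemma osimplex_PO: assumes w: "w \<in> Words" and lam: "lam \<in> osimplex (Cw w)"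
  shows "\<exists>ts\<in>TS. lam = PO w ts"
proof -
  have l0: "\<And>x. 0 \<le> lam x" and lout: "\<And>x. x \<notin> Cw w \<Longrightarrow> lam x = 0" and l1: "sum lam (Cw w) = 1"
    using lam unfolding osimplex_def by auto
  define S where "S = (\<lambda>i. \<Sum>j<i. lam (xc w j))"
  define ts where "ts = map (\<lambda>i. S (Suc i)) [0..<n]"
  have S1: "S (Suc n) = 1"
  proof -
    have "S (Suc n) = (\<Sum>j\<in>{0..n}. lam (xc w j))" unfolding S_def
      by (rule sum.cong) auto
    also have "\<dots> = 1" using sum_Cw[OF w, of lam] l1 by simp
    finally show ?thesis .
  qed
  have Smono: "S i \<le> S j" if "i \<le> j" for i j
    unfolding S_def using l0 that by (intro sum_mono2) auto
  have Tfs: "Tf ts i = S i" if iS: "i \<le> Suc n" for i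
  proof -
    consider "i = 0" | "0 < i" "i \<le> n" | "i = Suc n" using iS by linarith
    then show ?thesis
    proof cases
      case 1 then show ?thesis unfolding S_def by simp
    next
      case 2
      then have "[0..<n] ! (i - 1) = i - 1" by simp
      then show ?thesis unfolding Tf_def ts_def using 2 by simp
    next
      case 3 then show ?thesis using S1 by simp
    qed
  qed
  have tsTS: "ts \<in> TS"
  proof -
    have "sorted ts" unfolding ts_def sorted_iff_nth_mono using Smono by simp
    moreover have "\<forall>t\<in>set ts. 0 \<le> t \<and> t \<le> 1"
    proof
      fix t assume "t \<in> set ts"
      then obtain i where i: "i < n" "t = S (Suc i)" unfolding ts_def by auto
      have "S 0 \<le> S (Suc i)" "S (Suc i) \<le> S (Suc n)" using Smono i by auto
      then show "0 \<le> t \<and> t \<le> 1" using i S1 unfolding S_def by simp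
    qed
    ultimately show ?thesis unfolding TS_def ts_def by simp
  qed
  have "lam = PO w ts"
  proof
    fix x
    show "lam x = PO w ts x"
    proof (cases "x \<in> Cw w")
      case True
      then obtain i where i: "i \<le> n" "x = xc w i" using Cw_sub[OF w] by blast
      have "PO w ts x = S (Suc i) - S i" using PO_xc[OF w i(1)] Tfs i by simp
      also have "\<dots> = lam x" unfolding S_def using i by simp
      finally show ?thesis by simp
    next
      case False then show ?thesis using lout PO_out by simp
    qed
  qed
  then show ?thesis using tsTS by blast
qed

lemma osimplex_Cw: assumes w: "w \<in> Words" shows "osimplex (Cw w) = PO w ` TS"
  using osimplex_PO[OF w] PO_osimplex[OF w] by blast

end

context wsetup_g
begin

definition Edist :: "real list \<Rightarrow> real list \<Rightarrow> real" where
  "Edist ts ts' = sqrt (\<Sum>i<n. (ts ! i - ts' ! i)\<^sup>2)"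

lemma finite_Cw: "finite (Cw w)" unfolding Cw_def by simp

lemma ortho_coord_PO: assumes w: "w \<in> Words" and ts: "ts \<in> TS" and j: "1 \<le> j" "j \<le> n"
  shows "ortho_coord G X n (Cw w) (PO w ts) j = 1 - ts ! (n - j)"
proof -
  define P where "P = (\<lambda>x. n + 1 - j \<le> chain_idx G X (Cw w) x)"
  have "ortho_coord G X n (Cw w) (PO w ts) j = (\<Sum>x\<in>{x \<in> Cw w. P x}. PO w ts x)"
    unfolding ortho_coord_def P_def by simp
  also have "\<dots> = (\<Sum>x\<in>Cw w. if P x then PO w ts x else 0)"
    using finite_Cw by (simp add: sum.inter_filter)
  also have "\<dots> = (\<Sum>i\<in>{0..n}. if P (xc w i) then PO w ts (xc w i) else 0)"
    using sum_Cw[OF w] .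
  also have "\<dots> = (\<Sum>i\<in>{0..n}. if n + 1 - j \<le> i then Tf ts (Suc i) - Tf ts i else 0)"
    by (rule sum.cong) (auto simp: P_def chain_idx_xc[OF w] PO_xc[OF w])
  also have "\<dots> = (\<Sum>i\<in>{n + 1 - j..n}. Tf ts (Suc i) - Tf ts i)"
  proof -
    have e: "{n + 1 - j..n} = {i \<in> {0..n}. n + 1 - j \<le> i}" by auto
    show ?thesis by (subst e, rule sum.inter_filter[symmetric], simp)
  qed
  also have "\<dots> = Tf ts (Suc n) - Tf ts (n + 1 - j)"
    by (rule sum_Suc_diff) (use j in simp)
  also have "\<dots> = 1 - ts ! (n - j)"
  proof -
    have "n + 1 - j - 1 = n - j" using j by simp
    then show ?thesis unfolding Tf_def using j by simp
  qed
  finally show ?thesis .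
qed

lemma O_cell_dist_PO: assumes w: "w \<in> Words" and ts: "ts \<in> TS" and ts': "ts' \<in> TS"
  shows "O_cell_dist G X g (Cw w) (PO w ts) (PO w ts') = Edist ts ts'"
proof -
  have "(\<Sum>j\<in>{1..n}. (ortho_coord G X n (Cw w) (PO w ts) j - ortho_coord G X n (Cw w) (PO w ts') j)\<^sup>2)
      = (\<Sum>j\<in>{1..n}. (ts ! (n - j) - ts' ! (n - j))\<^sup>2)"
  proof (rule sum.cong)
    fix j assume "j \<in> {1..n}"
    then show "(ortho_coord G X n (Cw w) (PO w ts) j - ortho_coord G X n (Cw w) (PO w ts') j)\<^sup>2
      = (ts ! (n - j) - ts' ! (n - j))\<^sup>2"
      using ortho_coord_PO[OF w ts] ortho_coord_PO[OF w ts'] by (simp add: power2_commute)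
  qed simp
  also have "\<dots> = (\<Sum>i<n. (ts ! i - ts' ! i)\<^sup>2)"
    by (rule sum.reindex_bij_witness[of _ "\<lambda>i. n - i" "\<lambda>j. n - j"]) auto
  finally show ?thesis unfolding O_cell_dist_def Edist_def by simp
qed

lemma sum_low: assumes w: "w \<in> Words" and i: "i \<le> Suc n" and U: "finite U" "Cw w \<subseteq> U"
  shows "(\<Sum>x\<in>{x\<in>U. wlen G X x < i}. PO w ts x) = Tf ts i"
proof -
  have "(\<Sum>x\<in>{x\<in>U. wlen G X x < i}. PO w ts x) = (\<Sum>x\<in>{x\<in>Cw w. wlen G X x < i}. PO w ts x)"
    by (rule sum.mono_neutral_right) (use U PO_out in auto)
  also have "\<dots> = (\<Sum>x\<in>Cw w. if wlen G X x < i then PO w ts x else 0)"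
    using finite_Cw by (simp add: sum.inter_filter)
  also have "\<dots> = (\<Sum>k\<in>{0..n}. if wlen G X (xc w k) < i then PO w ts (xc w k) else 0)"
    using sum_Cw[OF w] .
  also have "\<dots> = (\<Sum>k\<in>{0..n}. if k < i then Tf ts (Suc k) - Tf ts k else 0)"
    by (rule sum.cong) (auto simp: xc_len[OF w] PO_xc[OF w])
  also have "\<dots> = (\<Sum>k\<in>{..<i}. Tf ts (Suc k) - Tf ts k)"
  proof -
    have e: "{..<i} = {k \<in> {0..n}. k < i}" using i by auto
    show ?thesis by (subst e, rule sum.inter_filter[symmetric], simp)
  qed
  also have "\<dots> = Tf ts i" by (simp add: sum_lessThan_telescope)
  finally show ?thesis .
qed

lemma PO_eq_ts: assumes w: "w \<in> Words" "w' \<in> Words" and ts: "ts \<in> TS" "ts' \<in> TS"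
  and eq: "PO w ts = PO w' ts'"
  shows "ts = ts'"
proof -
  define U where "U = Cw w \<union> Cw w'"
  have U: "finite U" "Cw w \<subseteq> U" "Cw w' \<subseteq> U" unfolding U_def using finite_Cw by auto
  have T: "Tf ts i = Tf ts' i" if "i \<le> Suc n" for i
    using sum_low[OF w(1) that U(1,2), of ts] sum_low[OF w(2) that U(1,3), of ts'] eq by simp
  show ?thesis
  proof (rule nth_equalityI)
    show "length ts = length ts'" using ts unfolding TS_def by simp
    fix k assume "k < length ts"
    then have k: "k < n" using ts unfolding TS_def by simp
    have "Tf ts (Suc k) = Tf ts' (Suc k)" using T k by simp
    then show "ts ! k = ts' ! k" unfolding Tf_def using k by simp
  qed
qed

lemma PO_eq_gap: assumes w: "w \<in> Words" "w' \<in> Words" and ts: "ts \<in> TS" "ts' \<in> TS"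
  and eq: "PO w ts = PO w' ts'" and i: "i \<le> n" and gap: "Tf ts i < Tf ts (Suc i)"
  shows "xc w i = xc w' i"
proof -
  have "PO w' ts' (xc w i) \<noteq> 0" using PO_xc[OF w(1) i, of ts] gap eq by simp
  then have "xc w i \<in> Cw w'" using PO_out by blast
  then obtain k where k: "k \<le> n" "xc w i = xc w' k" using Cw_sub[OF w(2)] by blast
  have "k = i" using xc_len[OF w(1) i] xc_len[OF w(2) k(1)] k(2) by simp
  then show ?thesis using k by simp
qed

lemma PO_gap_sum: assumes ts: "ts \<in> TS"
  shows "PO w ts x = (\<Sum>i\<in>{i \<in> {0..n}. xc w i = x \<and> Tf ts i < Tf ts (Suc i)}. Tf ts (Suc i) - Tf ts i)"
  unfolding PO_def
proof (rule sum.mono_neutral_right)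
  show "\<forall>i\<in>{i \<in> {0..n}. xc w i = x} - {i \<in> {0..n}. xc w i = x \<and> Tf ts i < Tf ts (Suc i)}.
     Tf ts (Suc i) - Tf ts i = 0"
    using Tf_mono[OF ts] by force
qed auto

lemma PO_eq_from_gap: assumes ts: "ts \<in> TS"
  and gap: "\<And>i. i \<le> n \<Longrightarrow> Tf ts i < Tf ts (Suc i) \<Longrightarrow> xc w i = xc w' i"
  shows "PO w ts = PO w' ts"
proof
  fix x
  have "{i \<in> {0..n}. xc w i = x \<and> Tf ts i < Tf ts (Suc i)} = {i \<in> {0..n}. xc w' i = x \<and> Tf ts i < Tf ts (Suc i)}"
    using gap by auto
  then show "PO w ts x = PO w' ts x" using PO_gap_sum[OF ts, of w x] PO_gap_sum[OF ts, of w' x] by simp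
qed

end

lemma split3: fixes f :: "'b \<Rightarrow> real"
  assumes "sorted (map f L)"
  shows "L = filter (\<lambda>x. f x < r) L @ filter (\<lambda>x. f x = r) L @ filter (\<lambda>x. r < f x) L"
  using assms
proof (induction L)
  case Nil then show ?case by simp
next
  case (Cons p L)
  have s: "sorted (map f L)" and le: "\<forall>q\<in>set L. f p \<le> f q" using Cons.prems by auto
  have IH: "L = filter (\<lambda>x. f x < r) L @ filter (\<lambda>x. f x = r) L @ filter (\<lambda>x. r < f x) L"
    using Cons.IH s by simp
  consider "f p < r" | "f p = r" | "r < f p" by linarith
  then show ?case
  proof cases
    case 1 then show ?thesis using IH by simp
  next
    case 2
    then have "filter (\<lambda>x. f x < r) L = []" using le by (auto simp: filter_empty_conv)
    then show ?thesis using IH 2 by simp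
  next
    case 3
    then have "filter (\<lambda>x. f x < r) L = []" "filter (\<lambda>x. f x = r) L = []" using le
      by (auto simp: filter_empty_conv)
    then show ?thesis using IH 3 by simp
  qed
qed

context wsetup_g
begin

definition PW :: "'a list \<Rightarrow> real list \<Rightarrow> real \<Rightarrow> 'a" where
  "PW w ts = (\<lambda>r. if 0 \<le> r \<and> r \<le> 1 then wprod G (map fst (filter (\<lambda>p. snd p = r) (zip w ts))) else \<one>)"

definition pA :: "real list \<Rightarrow> real \<Rightarrow> nat" where
  "pA ts r = length (filter (\<lambda>t. t < r) ts)"

definition pB :: "real list \<Rightarrow> real \<Rightarrow> nat" where
  "pB ts r = length (filter (\<lambda>t. t = r) ts)"

lemma TS_len: "ts \<in> TS \<Longrightarrow> length ts = n" unfolding TS_def by simp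
lemma TS_sorted: "ts \<in> TS \<Longrightarrow> sorted ts" unfolding TS_def by simp

lemma ts_idx: assumes ts: "ts \<in> TS" and j: "j < n"
  shows "j < pA ts r \<Longrightarrow> ts ! j < r"
    and "pA ts r \<le> j \<Longrightarrow> j < pA ts r + pB ts r \<Longrightarrow> ts ! j = r"
    and "pA ts r + pB ts r \<le> j \<Longrightarrow> r < ts ! j"
proof -
  have sp: "ts = filter (\<lambda>x. x < r) ts @ filter (\<lambda>x. x = r) ts @ filter (\<lambda>x. r < x) ts"
    using split3[of id ts r] TS_sorted[OF ts] by simp
  have ln: "length ts = n" using TS_len[OF ts] .
  {
    assume a: "j < pA ts r"
    have "ts ! j = filter (\<lambda>x. x < r) ts ! j" using a unfolding pA_def
      by (subst sp) (simp add: nth_append)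
    also have "\<dots> \<in> set (filter (\<lambda>x. x < r) ts)" using a unfolding pA_def by (rule nth_mem)
    finally show "ts ! j < r" by simp
  }
  {
    assume a: "pA ts r \<le> j" "j < pA ts r + pB ts r"
    have "ts ! j = filter (\<lambda>x. x = r) ts ! (j - pA ts r)" using a unfolding pA_def pB_def
      by (subst sp) (simp add: nth_append)
    also have "\<dots> \<in> set (filter (\<lambda>x. x = r) ts)" using a unfolding pA_def pB_def
      by (intro nth_mem) simp
    finally show "ts ! j = r" by simp
  }
  {
    assume a: "pA ts r + pB ts r \<le> j"
    have lsp: "length ts = pA ts r + pB ts r + length (filter (\<lambda>x. r < x) ts)"
      unfolding pA_def pB_def by (subst sp) simp
    have "ts ! j = filter (\<lambda>x. r < x) ts ! (j - pA ts r - pB ts r)" using a unfolding pA_def pB_def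
      by (subst sp) (simp add: nth_append)
    also have "\<dots> \<in> set (filter (\<lambda>x. r < x) ts)" using a j ln lsp
      by (intro nth_mem) linarith
    finally show "r < ts ! j" by simp
  }
qed

lemma pAB_le: assumes ts: "ts \<in> TS" shows "pA ts r + pB ts r \<le> n"
proof -
  have sp: "ts = filter (\<lambda>x. x < r) ts @ filter (\<lambda>x. x = r) ts @ filter (\<lambda>x. r < x) ts"
    using split3[of id ts r] TS_sorted[OF ts] by simp
  have "length ts = pA ts r + pB ts r + length (filter (\<lambda>x. r < x) ts)"
    unfolding pA_def pB_def by (subst sp) simp
  then show ?thesis using TS_len[OF ts] by simp
qed

lemma block: fixes r :: real assumes w: "w \<in> Words" and ts: "ts \<in> TS"
  defines "B \<equiv> filter (\<lambda>p. snd p = r) (zip w ts)"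
  shows "xc w (pA ts r + pB ts r) = xc w (pA ts r) \<otimes> wprod G (map fst B)"
    and "wlen G X (wprod G (map fst B)) = pB ts r"
    and "map fst B \<in> lists X"
proof -
  define L where "L = zip w ts"
  have len: "length w = length ts" using Words_len[OF w] TS_len[OF ts] by simp
  have ms: "map snd L = ts" "map fst L = w" unfolding L_def using len by auto
  define A where "A = filter (\<lambda>p. snd p < r) L"
  define C where "C = filter (\<lambda>p. r < snd p) L"
  have BL: "B = filter (\<lambda>p. snd p = r) L" unfolding B_def L_def ..
  have sp: "L = A @ B @ C" unfolding A_def BL C_def
    using split3[of snd L r] ms TS_sorted[OF ts] by simp
  have "map snd A = filter (\<lambda>t. t < r) (map snd L)" unfolding A_def by (simp add: filter_map o_def)
  then have lA: "length A = pA ts r" unfolding pA_def ms(1)[symmetric] by (metis length_map)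
  have "map snd B = filter (\<lambda>t. t = r) (map snd L)" unfolding BL by (simp add: filter_map o_def)
  then have lB: "length B = pB ts r" unfolding pB_def ms(1)[symmetric] by (metis length_map)
  have tk: "take k w = map fst (take k L)" for k using take_map[of k fst L] ms(2) by simp
  have wl: "w \<in> lists X" using Words_lists[OF w] .
  have wsp: "w = map fst A @ map fst B @ map fst C" using arg_cong[OF sp, of "map fst"] ms(2) by simp
  have "set (map fst A) \<subseteq> set w" "set (map fst B) \<subseteq> set w" using arg_cong[OF wsp, of set] by auto
  then have AX: "map fst A \<in> lists X" and BX: "map fst B \<in> lists X" using wl by (auto simp: lists_eq_set)
  show "map fst B \<in> lists X" using BX .
  have "take (pA ts r + pB ts r) L = A @ B" using sp lA lB by simp
  then have "xc w (pA ts r + pB ts r) = wprod G (map fst A @ map fst B)" unfolding xc_def tk by simp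
  also have "\<dots> = wprod G (map fst A) \<otimes> wprod G (map fst B)" using wprod_append_X AX BX by blast
  also have "wprod G (map fst A) = xc w (pA ts r)" unfolding xc_def tk using sp lA by simp
  finally show "xc w (pA ts r + pB ts r) = xc w (pA ts r) \<otimes> wprod G (map fst B)" .
  have "geo (map fst B)" using geo_sub[of "map fst A" "map fst B" "map fst C"] Words_geo[OF w] wsp by simp
  then show "wlen G X (wprod G (map fst B)) = pB ts r" unfolding geo_def using lB by simp
qed

lemma PW_in: assumes "0 \<le> r" "r \<le> 1"
  shows "PW w ts r = wprod G (map fst (filter (\<lambda>p. snd p = r) (zip w ts)))"
  unfolding PW_def using assms by simp

lemma PW_block: assumes w: "w \<in> Words" and ts: "ts \<in> TS" and r: "0 \<le> r" "r \<le> 1"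
  shows "xc w (pA ts r + pB ts r) = xc w (pA ts r) \<otimes> PW w ts r"
    and "wlen G X (PW w ts r) = pB ts r"
    and "PW w ts r \<in> Mon G X"
proof -
  have e: "PW w ts r = wprod G (map fst (filter (\<lambda>p. snd p = r) (zip w ts)))" using PW_in[OF r] .
  show "xc w (pA ts r + pB ts r) = xc w (pA ts r) \<otimes> PW w ts r" unfolding e by (rule block(1)[OF w ts])
  show "wlen G X (PW w ts r) = pB ts r" unfolding e by (rule block(2)[OF w ts])
  show "PW w ts r \<in> Mon G X" unfolding e by (rule MonI[OF block(3)[OF w ts]])
qed

lemma PW_out: "\<not> (0 \<le> r \<and> r \<le> 1) \<Longrightarrow> PW w ts r = \<one>"
  unfolding PW_def by auto

end

context wsetup_g
begin

lemma Tf_mid: "0 < i \<Longrightarrow> i \<le> n \<Longrightarrow> Tf ts i = ts ! (i - 1)"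
  unfolding Tf_def by simp

lemma count_pB: "count (mset ts) r = pB ts r"
proof -
  have "count (mset ts) r = length (filter ((=) r) ts)" unfolding count_mset by (rule count_list_eq_length_filter)
  also have "filter ((=) r) ts = filter (\<lambda>t. t = r) ts" by (rule filter_cong) auto
  finally show ?thesis unfolding pB_def .
qed

lemma PW_eq_ts: assumes w: "w \<in> Words" "w' \<in> Words" and ts: "ts \<in> TS" "ts' \<in> TS"
  and eq: "PW w ts = PW w' ts'"
  shows "ts = ts'"
proof -
  have "count (mset ts) r = count (mset ts') r" for r
  proof (cases "0 \<le> r \<and> r \<le> 1")
    case True
    then have "pB ts r = pB ts' r" using PW_block(2)[OF w(1) ts(1), of r] PW_block(2)[OF w(2) ts(2), of r] eq by simp
    then show ?thesis using count_pB by simp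
  next
    case False
    then have "r \<notin> set ts" "r \<notin> set ts'" using ts unfolding TS_def by auto
    then have "count_list ts r = 0" "count_list ts' r = 0" by (simp_all add: count_list_0_iff)
    then show ?thesis unfolding count_mset by simp
  qed
  then have "mset ts' = mset ts" by (simp add: multiset_eq_iff)
  then have "sort ts = ts'" using properties_for_sort TS_sorted[OF ts(2)] by blast
  then show ?thesis using sorted_sort_id[OF TS_sorted[OF ts(1)]] by simp
qed

lemma PW_inv: assumes w: "w \<in> Words" and ts: "ts \<in> TS" and r: "0 \<le> r" "r \<le> 1"
  shows "PW w ts r = inv (xc w (pA ts r)) \<otimes> xc w (pA ts r + pB ts r)"
proof -
  have c: "PW w ts r \<in> carrier G" using PW_block(3)[OF w ts r] Mon_carrier by blast
  show ?thesis
    by (subst inv_solve_left[OF c xc_carrier[OF w, of "pA ts r"] xc_carrier[OF w, of "pA ts r + pB ts r"]])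
       (rule PW_block(1)[OF w ts r])
qed

lemma PW_eq_gap: assumes w: "w \<in> Words" "w' \<in> Words" and ts: "ts \<in> TS"
  and eq: "PW w ts = PW w' ts"
  shows "i \<le> n \<Longrightarrow> Tf ts i < Tf ts (Suc i) \<Longrightarrow> xc w i = xc w' i"
proof (induction i rule: less_induct)
  case (less i)
  consider "i = 0" | "i = n" | "0 < i" "i < n" using less.prems by linarith
  then show ?case
  proof cases
    case 1 then show ?thesis by simp
  next
    case 2 then show ?thesis using xc_n w by simp
  next
    case 3
    define r where "r = ts ! (i - 1)"
    have Ti: "Tf ts i = r" unfolding r_def using Tf_mid 3 by simp
    have TSi: "Tf ts (Suc i) = ts ! i" using Tf_mid[of "Suc i"] 3 by simp
    have ri: "r < ts ! i" using less.prems Ti TSi by simp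
    have r01: "0 \<le> r" "r \<le> 1" unfolding r_def using TS_nth[OF ts, of "i - 1"] 3 by auto
    define p where "p = pA ts r"
    define q where "q = pA ts r + pB ts r"
    have im1: "i - 1 < n" using 3 by simp
    have a1: "\<not> (i - 1 < p)" using ts_idx(1)[OF ts im1, of r] unfolding p_def r_def by auto
    have a2: "\<not> (q \<le> i - 1)" using ts_idx(3)[OF ts im1, of r] unfolding q_def r_def by auto
    have a3: "\<not> (i < p)" using ts_idx(1)[OF ts 3(2), of r] ri unfolding p_def by auto
    have a4: "\<not> (p \<le> i \<and> i < q)" using ts_idx(2)[OF ts 3(2), of r] ri unfolding p_def q_def by auto
    have qi: "q = i" using a1 a2 a3 a4 by linarith
    have pi: "p < i" using a1 a2 qi by linarith
    have pB: "pB ts r > 0" using a1 a2 unfolding p_def q_def by linarith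
    have xp: "xc w p = xc w' p"
    proof (cases "p = 0")
      case True then show ?thesis by simp
    next
      case False
      have pn: "p < n" using pi 3 by simp
      have "Tf ts p = ts ! (p - 1)" using Tf_mid False pn by simp
      also have "\<dots> < r" using ts_idx(1)[OF ts, of "p - 1" r] pn False unfolding p_def by simp
      also have "r = ts ! p" using ts_idx(2)[OF ts pn, of r] pB unfolding p_def by simp
      also have "\<dots> = Tf ts (Suc p)" using Tf_mid[of "Suc p"] pn by simp
      finally have "Tf ts p < Tf ts (Suc p)" .
      then show ?thesis using less.IH[OF pi] pn by simp
    qed
    have "xc w i = xc w p \<otimes> PW w ts r" using PW_block(1)[OF w(1) ts r01] qi unfolding p_def q_def by simp
    also have "\<dots> = xc w' p \<otimes> PW w' ts r" using xp eq by simp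
    also have "\<dots> = xc w' i" using PW_block(1)[OF w(2) ts r01] qi unfolding p_def q_def by simp
    finally show ?thesis .
  qed
qed

lemma PW_eq_from_gap: assumes w: "w \<in> Words" "w' \<in> Words" and ts: "ts \<in> TS"
  and gap: "\<And>i. i \<le> n \<Longrightarrow> Tf ts i < Tf ts (Suc i) \<Longrightarrow> xc w i = xc w' i"
  shows "PW w ts = PW w' ts"
proof
  fix r
  show "PW w ts r = PW w' ts r"
  proof (cases "0 \<le> r \<and> r \<le> 1")
    case False then show ?thesis using PW_out by simp
  next
    case True
    then have r01: "0 \<le> r" "r \<le> 1" by auto
    show ?thesis
    proof (cases "pB ts r = 0")
      case True
      have "PW w ts r = \<one>" using wlen_zero[OF PW_block(3)[OF w(1) ts r01]] PW_block(2)[OF w(1) ts r01] True by simp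
      moreover have "PW w' ts r = \<one>" using wlen_zero[OF PW_block(3)[OF w(2) ts r01]] PW_block(2)[OF w(2) ts r01] True by simp
      ultimately show ?thesis by simp
    next
      case False
      define p where "p = pA ts r"
      define q where "q = pA ts r + pB ts r"
      have qn: "q \<le> n" unfolding q_def using pAB_le[OF ts] .
      have pq: "p < q" using False unfolding p_def q_def by simp
      have xp: "xc w p = xc w' p"
      proof (cases "p = 0")
        case True then show ?thesis by simp
      next
        case pz: False
        have pn: "p < n" using pq qn by simp
        have "Tf ts p = ts ! (p - 1)" using Tf_mid pz pn by simp
        also have "\<dots> < r" using ts_idx(1)[OF ts, of "p - 1" r] pn pz unfolding p_def by simp
        also have "r = ts ! p" using ts_idx(2)[OF ts pn, of r] pq unfolding p_def q_def by simp
        also have "\<dots> = Tf ts (Suc p)" using Tf_mid[of "Suc p"] pn by simp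
        finally have "Tf ts p < Tf ts (Suc p)" .
        then show ?thesis using gap pn by simp
      qed
      have xq: "xc w q = xc w' q"
      proof (cases "q = n")
        case True then show ?thesis using xc_n w by simp
      next
        case qn': False
        then have qn2: "q < n" using qn by simp
        have qm: "q - 1 < n" using qn2 by simp
        have "Tf ts q = ts ! (q - 1)" using Tf_mid pq qn by simp
        also have "\<dots> = r" using ts_idx(2)[OF ts qm, of r] pq unfolding p_def q_def by simp
        also have "r < ts ! q" using ts_idx(3)[OF ts qn2, of r] unfolding q_def by simp
        also have "\<dots> = Tf ts (Suc q)" using Tf_mid[of "Suc q"] qn2 by simp
        finally have "Tf ts q < Tf ts (Suc q)" .
        then show ?thesis using gap qn by simp
      qed
      show ?thesis using PW_inv[OF w(1) ts r01] PW_inv[OF w(2) ts r01] xp xq unfolding p_def q_def by simp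
    qed
  qed
qed

lemma PO_PW_iff: assumes w: "w \<in> Words" "w' \<in> Words" and ts: "ts \<in> TS" "ts' \<in> TS"
  shows "PO w ts = PO w' ts' \<longleftrightarrow> PW w ts = PW w' ts'"
proof
  assume e: "PO w ts = PO w' ts'"
  have tt: "ts = ts'" using PO_eq_ts[OF w ts e] .
  have "PW w ts = PW w' ts" using PW_eq_from_gap[OF w ts(1)] PO_eq_gap[OF w ts e] by blast
  then show "PW w ts = PW w' ts'" using tt by simp
next
  assume e: "PW w ts = PW w' ts'"
  have tt: "ts = ts'" using PW_eq_ts[OF w ts e] .
  have e2: "PW w ts = PW w' ts" using e tt by simp
  have "PO w ts = PO w' ts" using PO_eq_from_gap[OF ts(1)] PW_eq_gap[OF w ts(1) e2] by blast
  then show "PO w ts = PO w' ts'" using tt by simp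
qed

end

lemma count_list_rep: "count_list (replicate k r) x = (if r = x then k else 0)"
  by (induction k) auto

lemma mset_concat_rep: assumes "distinct R" "set_mset M \<subseteq> set R"
  shows "mset (concat (map (\<lambda>r. replicate (count M r) r) R)) = M"
proof (rule multiset_eqI)
  fix x
  have "count (mset (concat (map (\<lambda>r. replicate (count M r) r) R))) x
      = sum_list (map (\<lambda>r. count_list (replicate (count M r) r) x) R)"
    unfolding count_mset count_list_concat by (simp add: o_def)
  also have "\<dots> = (\<Sum>r\<in>set R. count_list (replicate (count M r) r) x)"
    using assms(1) by (rule sum_list_distinct_conv_sum_set)
  also have "\<dots> = (\<Sum>r\<in>set R. if r = x then count M x else 0)"
    by (rule sum.cong) (auto simp: count_list_rep)
  also have "\<dots> = count M x" using assms(2) by (auto simp: count_eq_zero_iff)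
  finally show "count (mset (concat (map (\<lambda>r. replicate (count M r) r) R))) x = count M x" .
qed

context wsetup_g
begin

lemma Lmap_PW: assumes w: "w \<in> Words" and ts: "ts \<in> TS"
  shows "Lmap G X (PW w ts) = (\<lambda>r. count (mset ts) r)"
proof
  fix r
  show "Lmap G X (PW w ts) r = count (mset ts) r"
  proof (cases "0 \<le> r \<and> r \<le> 1")
    case True
    then show ?thesis unfolding Lmap_def using PW_block(2)[OF w ts] count_pB by simp
  next
    case False
    then have "r \<notin> set ts" using ts unfolding TS_def by auto
    then have c: "count_list ts r = 0" by (simp add: count_list_0_iff)
    show ?thesis unfolding Lmap_def if_not_P[OF False] count_mset c ..
  qed
qed

lemma ortho_point_PW: assumes w: "w \<in> Words" and ts: "ts \<in> TS"
  shows "ortho_point (Lmap G X (PW w ts)) = ts"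
proof -
  have S: "{r. 0 \<le> r \<and> r \<le> 1 \<and> count (mset ts) r \<noteq> 0} = set ts"
    using ts unfolding TS_def count_mset by (auto simp: count_list_0_iff)
  define R where "R = sorted_list_of_set (set ts)"
  have R: "distinct R" "set R = set ts" unfolding R_def by auto
  have "mset (concat (map (\<lambda>r. replicate (count (mset ts) r) r) R)) = mset ts"
    by (rule mset_concat_rep) (use R in auto)
  then have "sort (concat (map (\<lambda>r. replicate (count (mset ts) r) r) R)) = ts"
    using properties_for_sort[of ts] TS_sorted[OF ts] by (metis)
  then show ?thesis unfolding ortho_point_def Lmap_PW[OF w ts] S R_def .
qed

lemma W_cell_dist_PW: assumes w: "w \<in> Words" "w' \<in> Words" and ts: "ts \<in> TS" "ts' \<in> TS"
  shows "W_cell_dist G X g xs (PW w ts) (PW w' ts') = Edist ts ts'"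
  unfolding W_cell_dist_def ortho_point_PW[OF w(1) ts(1)] ortho_point_PW[OF w(2) ts(2)]
    eucl_list_dist_def Edist_def ..

lemma letters_nonone: assumes w: "w \<in> Words" and a: "a \<in> set w" shows "a \<in> X" "a \<noteq> \<one>" "wlen G X a = 1"
proof -
  obtain i where i: "i < length w" "w ! i = a" using a by (auto simp: in_set_conv_nth)
  have "w = take i w @ [a] @ drop (Suc i) w" using id_take_nth_drop[OF i(1)] i(2) by simp
  then have "geo [a]" using geo_sub[of "take i w" "[a]" "drop (Suc i) w"] Words_geo[OF w] by simp
  then show "a \<in> X" "wlen G X a = 1" unfolding geo_def using Xc by auto
  then show "a \<noteq> \<one>" by auto
qed

lemma lin_fact_letters: assumes w: "w \<in> Words"
  shows "lin_fact G X g ([\<one>] @ w @ [\<one>])"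
proof -
  have wl: "w \<in> lists X" using Words_lists[OF w] .
  have s1: "set ([\<one>] @ w @ [\<one>]) \<subseteq> Mon G X"
  proof
    fix x assume "x \<in> set ([\<one>] @ w @ [\<one>])"
    then consider "x = \<one>" | "x \<in> set w" by auto
    then show "x \<in> Mon G X"
    proof cases
      case 1 then show ?thesis using one_Mon by simp
    next
      case 2
      then have "x \<in> X" using wl by auto
      then have "[x] \<in> lists X" by simp
      from MonI[OF this] show ?thesis using Xc \<open>x \<in> X\<close> by auto
    qed
  qed
  have s2: "\<forall>i. 0 < i \<and> i < length ([\<one>] @ w @ [\<one>]) - 1 \<longrightarrow> ([\<one>] @ w @ [\<one>]) ! i \<noteq> \<one>"
  proof (intro allI impI)
    fix i assume i: "0 < i \<and> i < length ([\<one>] @ w @ [\<one>]) - 1"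
    then have "([\<one>] @ w @ [\<one>]) ! i = w ! (i - 1)" by (cases i) (auto simp: nth_append)
    moreover have "w ! (i - 1) \<in> set w" using i by auto
    ultimately show "([\<one>] @ w @ [\<one>]) ! i \<noteq> \<one>" using letters_nonone[OF w] by simp
  qed
  have s3: "(\<Sum>x\<leftarrow>[\<one>] @ w @ [\<one>]. wlen G X x) = n"
  proof -
    have "(\<Sum>x\<leftarrow>w. wlen G X x) = (\<Sum>x\<leftarrow>w. 1)"
      by (rule arg_cong[where f = sum_list], rule map_cong) (use letters_nonone[OF w] in auto)
    also have "\<dots> = length w" by (simp add: sum_list_triv)
    finally show ?thesis using Words_len[OF w] by simp
  qed
  have wc: "set w \<subseteq> carrier G" using lists_X_carrier[OF wl] .
  have "wprod G (w @ [\<one>]) = wprod G w \<otimes> wprod G [\<one>]" by (rule wprod_append) (use wc in auto)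
  then have s4: "wprod G ([\<one>] @ w @ [\<one>]) = g"
    using wprod_lists_closed[OF wl] Words_prod[OF w] by simp
  show ?thesis unfolding lin_fact_def using s1 s2 s3 s4 by simp
qed

lemma zip_letters: assumes w: "w \<in> Words" and ts: "ts \<in> TS"
  shows "zip w ts = map (\<lambda>i. (([\<one>] @ w @ [\<one>]) ! i, ts ! (i - 1))) [1..<n+1]"
proof (rule nth_equalityI)
  have lw: "length w = n" "length ts = n" using Words_len[OF w] TS_len[OF ts] by auto
  show "length (zip w ts) = length (map (\<lambda>i. (([\<one>] @ w @ [\<one>]) ! i, ts ! (i - 1))) [1..<n+1])"
    using lw by simp
  fix j assume "j < length (zip w ts)"
  then have j: "j < n" using lw by simp
  have "([\<one>] @ w @ [\<one>]) ! (Suc j) = w ! j" using j lw by (simp add: nth_append)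
  moreover have "map (\<lambda>i. (([\<one>] @ w @ [\<one>]) ! i, ts ! (i - 1))) [1..<n+1] ! j
      = (([\<one>] @ w @ [\<one>]) ! (1 + j), ts ! (1 + j - 1))"
    using j by (subst nth_map_upt) auto
  ultimately show "zip w ts ! j = map (\<lambda>i. (([\<one>] @ w @ [\<one>]) ! i, ts ! (i - 1))) [1..<n+1] ! j"
    using j lw by simp
qed

lemma PW_in_cell: assumes w: "w \<in> Words" and ts: "ts \<in> TS"
  shows "PW w ts \<in> W_cell G ([\<one>] @ w @ [\<one>])"
proof -
  define xs where "xs = [\<one>] @ w @ [\<one>]"
  define s where "s = (\<lambda>i. ts ! (i - 1))"
  have lw: "length w = n" "length ts = n" using Words_len[OF w] TS_len[OF ts] by auto
  have k: "length xs - 2 = n" unfolding xs_def using lw by simp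
  have mid: "map (\<lambda>i. xs ! i) (filter (\<lambda>i. s i = r) [1..<n+1])
      = map fst (filter (\<lambda>p. snd p = r) (zip w ts))" for r
    unfolding zip_letters[OF w ts] filter_map map_map xs_def s_def by (simp add: o_def)
  have midc: "wprod G (map fst (filter (\<lambda>p. snd p = r) (zip w ts))) \<in> carrier G" for r
    using block(3)[OF w ts, of r] wprod_lists_closed by blast
  have x0: "xs ! 0 = \<one>" unfolding xs_def by simp
  have xn: "xs ! (n + 1) = \<one>" unfolding xs_def by (simp add: nth_append lw(1))
  have eq: "PW w ts = char_map G xs s"
  proof
    fix r
    define M where "M = wprod G (map fst (filter (\<lambda>p. snd p = r) (zip w ts)))"
    have Mc: "M \<in> carrier G" unfolding M_def by (rule midc)
    have c: "char_map G xs s r = (if r = 0 then \<one> \<otimes> M else if r = 1 then M \<otimes> \<one> else if 0 < r \<and> r < 1 then M else \<one>)"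
      unfolding char_map_def Let_def k mid x0 xn M_def ..
    have p: "PW w ts r = (if 0 \<le> r \<and> r \<le> 1 then M else \<one>)" unfolding PW_def M_def ..
    show "PW w ts r = char_map G xs s r"
    proof -
      consider "r < 0" | "r = 0" | "0 < r \<and> r < 1" | "r = 1" | "1 < r" by linarith
      then show ?thesis
      proof cases
        case 1 then show ?thesis unfolding c p by simp
      next
        case 2 then show ?thesis unfolding c p using Mc by simp
      next
        case 3 then show ?thesis unfolding c p by simp
      next
        case 4 then show ?thesis unfolding c p using Mc by simp
      next
        case 5 then show ?thesis unfolding c p by simp
      qed
    qed
  qed
  have cons: "(n > 0 \<longrightarrow> 0 \<le> s 1 \<and> s n \<le> 1) \<and> (\<forall>i. 1 \<le> i \<and> i < n \<longrightarrow> s i \<le> s (Suc i))"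
  proof (intro conjI impI allI)
    assume "n > 0"
    then show "0 \<le> s 1" "s n \<le> 1" unfolding s_def using TS_nth[OF ts, of 0] TS_nth[OF ts, of "n - 1"] by auto
  next
    fix i assume "1 \<le> i \<and> i < n"
    then show "s i \<le> s (Suc i)" unfolding s_def using TS_mono[OF ts, of "i - 1" i] by simp
  qed
  have cons': "let k = length xs - 2 in (k > 0 \<longrightarrow> 0 \<le> s 1 \<and> s k \<le> 1) \<and> (\<forall>i. 1 \<le> i \<and> i < k \<longrightarrow> s i \<le> s (Suc i))"
    unfolding Let_def k by (rule cons)
  have "char_map G xs s \<in> W_cell G xs" unfolding W_cell_def mem_Collect_eq
    by (rule exI[of _ s], rule conjI[OF refl cons'])
  then show ?thesis using eq unfolding xs_def by simp
qed

end

lemma filter_const_pair: "map fst (filter (\<lambda>p. snd p = r) (map (\<lambda>a. (a, c)) l)) = (if c = r then l else [])"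
  by (induction l) auto

lemma sorted_concat_rep: fixes f :: "nat \<Rightarrow> real"
  assumes "sorted I" "\<And>i j. i \<in> set I \<Longrightarrow> j \<in> set I \<Longrightarrow> i \<le> j \<Longrightarrow> f i \<le> f j"
  shows "sorted (concat (map (\<lambda>i. replicate (c i) (f i)) I))"
  using assms
proof (induction I)
  case Nil then show ?case by simp
next
  case (Cons i I)
  have IH: "sorted (concat (map (\<lambda>i. replicate (c i) (f i)) I))"
    using Cons by simp
  have "\<forall>x\<in>set (concat (map (\<lambda>i. replicate (c i) (f i)) I)). f i \<le> x"
  proof
    fix x assume "x \<in> set (concat (map (\<lambda>i. replicate (c i) (f i)) I))"
    then obtain j where j: "j \<in> set I" "x = f j" by (auto split: if_splits)
    have "i \<le> j" using Cons.prems(1) j(1) by simp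
    then show "f i \<le> x" using Cons.prems(2)[of i j] j by simp
  qed
  then show ?case using IH by (simp add: sorted_append)
qed

context wsetup
begin

lemma wprod_concat: assumes "\<And>l. l \<in> set L \<Longrightarrow> set l \<subseteq> carrier G"
  shows "wprod G (concat L) = wprod G (map (wprod G) L)"
  using assms
proof (induction L)
  case Nil then show ?case by simp
next
  case (Cons l L)
  have c: "set (concat L) \<subseteq> carrier G" using Cons.prems by auto
  have "wprod G (concat (l # L)) = wprod G l \<otimes> wprod G (concat L)"
    using wprod_append[OF _ c, of l] Cons.prems by simp
  then show ?case using Cons by simp
qed

lemma wprod_concat_if: assumes "\<And>i. i \<in> set I \<Longrightarrow> set (v i) \<subseteq> carrier G"
  shows "wprod G (concat (map (\<lambda>i. if P i then v i else []) I)) = wprod G (map (\<lambda>i. wprod G (v i)) (filter P I))"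
  using assms
proof (induction I)
  case Nil then show ?case by simp
next
  case (Cons i I)
  have c: "set (concat (map (\<lambda>i. if P i then v i else []) I)) \<subseteq> carrier G" using Cons.prems by auto
  show ?case
  proof (cases "P i")
    case True
    have "wprod G (concat (map (\<lambda>i. if P i then v i else []) (i # I)))
        = wprod G (v i) \<otimes> wprod G (concat (map (\<lambda>i. if P i then v i else []) I))"
      using wprod_append[OF _ c, of "v i"] Cons.prems True by simp
    then show ?thesis using Cons True by simp
  next
    case False then show ?thesis using Cons by simp
  qed
qed

end

context wsetup_g
begin

lemma refine: assumes lf: "lin_fact G X g xs"
  shows "\<exists>w\<in>Words. W_cell G xs \<subseteq> PW w ` TS"
proof -
  define k where "k = length xs - 2"
  have "2 \<le> length xs" using lf unfolding lin_fact_def by simp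
  then have lxs: "length xs = k + 2" unfolding k_def by simp
  have sxs: "set xs \<subseteq> Mon G X" using lf unfolding lin_fact_def by simp
  have xsM: "xs ! i \<in> Mon G X" if "i < k + 2" for i
  proof -
    have "xs ! i \<in> set xs" using that lxs by (intro nth_mem) simp
    then show ?thesis using sxs by blast
  qed
  have "\<forall>i. \<exists>v. i < k + 2 \<longrightarrow> geo v \<and> wprod G v = xs ! i \<and> length v = wlen G X (xs ! i)"
    using wlen_ex_geo xsM by blast
  from choice[OF this] obtain v where v0: "\<forall>i. i < k + 2 \<longrightarrow> geo (v i) \<and> wprod G (v i) = xs ! i \<and> length (v i) = wlen G X (xs ! i)"
    by blast
  have v: "\<And>i. i < k + 2 \<Longrightarrow> geo (v i) \<and> wprod G (v i) = xs ! i \<and> length (v i) = wlen G X (xs ! i)"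
    using v0 by blast
  define I where "I = [0..<k+2]"
  define w where "w = concat (map v I)"
  have vX: "v i \<in> lists X" if "i \<in> set I" for i
  proof -
    have "i < k + 2" using that unfolding I_def set_upt by (simp only: atLeastLessThan_iff)
    then show ?thesis using v[of i] unfolding geo_def by blast
  qed
  have vC: "set (v i) \<subseteq> carrier G" if "i \<in> set I" for i using lists_X_carrier[OF vX[OF that]] .
  have xsI: "map (\<lambda>i. xs ! i) I = xs" unfolding I_def lxs[symmetric] by (rule map_nth)
  have wX: "w \<in> lists X" unfolding in_lists_conv_set
  proof
    fix x assume "x \<in> set w"
    then obtain i where i: "i \<in> set I" "x \<in> set (v i)" unfolding w_def by auto
    then show "x \<in> X" using vX[OF i(1)] unfolding in_lists_conv_set by blast
  qed
  have lw: "length w = n"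
  proof -
    have "length w = sum_list (map (\<lambda>i. length (v i)) I)" unfolding w_def by (simp add: length_concat o_def)
    also have "\<dots> = sum_list (map (\<lambda>i. wlen G X (xs ! i)) I)"
      by (rule arg_cong[where f = sum_list], rule map_cong) (use v in \<open>auto simp: I_def\<close>)
    also have "\<dots> = sum_list (map (wlen G X) (map (\<lambda>i. xs ! i) I))" by (simp add: o_def)
    also have "\<dots> = sum_list (map (wlen G X) xs)" unfolding xsI ..
    also have "\<dots> = n" using lf unfolding lin_fact_def by simp
    finally show ?thesis .
  qed
  have wg: "wprod G w = g"
  proof -
    have "wprod G w = wprod G (map (wprod G) (map v I))" unfolding w_def
      by (rule wprod_concat) (use vC in auto)
    also have "map (wprod G) (map v I) = map (\<lambda>i. wprod G (v i)) I" by simp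
    also have "\<dots> = map (\<lambda>i. xs ! i) I"
      by (rule map_cong[OF refl]) (use v in \<open>auto simp: I_def\<close>)
    finally show ?thesis using xsI lf unfolding lin_fact_def by simp
  qed
  have wW: "w \<in> Words" unfolding Words_def geo_def using wX lw wg by simp
  have "W_cell G xs \<subseteq> PW w ` TS"
  proof
    fix u assume uW: "u \<in> W_cell G xs"
    obtain s where u: "u = char_map G xs s"
      and P: "let k = length xs - 2 in (k > 0 \<longrightarrow> 0 \<le> s 1 \<and> s k \<le> 1) \<and> (\<forall>i. 1 \<le> i \<and> i < k \<longrightarrow> s i \<le> s (Suc i))"
      using uW unfolding W_cell_def mem_Collect_eq by (elim exE conjE)
    have c1: "k > 0 \<longrightarrow> 0 \<le> s 1 \<and> s k \<le> 1" and c2: "\<forall>i. 1 \<le> i \<and> i < k \<longrightarrow> s i \<le> s (Suc i)"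
      using P unfolding Let_def k_def[symmetric] by auto
    have smono0: "s i \<le> s (i + d)" if "1 \<le> i" "i + d \<le> k" for i d
      using that(2)
    proof (induction d)
      case 0 then show ?case by simp
    next
      case (Suc d)
      have "s i \<le> s (i + d)" using Suc by simp
      moreover have "s (i + d) \<le> s (Suc (i + d))" using c2 that(1) Suc.prems by simp
      ultimately show ?case by simp
    qed
    have smono: "s i \<le> s j" if "1 \<le> i" "i \<le> j" "j \<le> k" for i j
      using smono0[of i "j - i"] that by simp
    define S where "S = (\<lambda>i. if i = 0 then 0 else if i \<le> k then s i else (1::real))"
    have Smono: "S i \<le> S j" if "i \<le> j" "j \<le> k + 1" for i j
    proof -
      have r: "0 \<le> s i \<and> s i \<le> 1" if "1 \<le> i" "i \<le> k" for i
        using smono[of 1 i] smono[of i k] that c1 by auto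
      have Sj0: "0 \<le> S j"
      proof (cases "j = 0")
        case False
        show ?thesis
        proof (cases "j \<le> k")
          case True then show ?thesis unfolding S_def using r[of j] False by simp
        qed (use False in \<open>simp add: S_def\<close>)
      qed (simp add: S_def)
      show ?thesis
      proof (cases "i = 0")
        case True then show ?thesis using Sj0 unfolding S_def by simp
      next
        case i0: False
        show ?thesis
        proof (cases "i \<le> k")
          case ik: True
          show ?thesis
          proof (cases "j \<le> k")
            case True then show ?thesis unfolding S_def using i0 ik smono[of i j] that by simp
          next
            case False then show ?thesis unfolding S_def using i0 ik r[of i] by simp
          qed
        next
          case False then show ?thesis unfolding S_def using i0 that by simp
        qed
      qed
    qed
    have S01: "0 \<le> S i \<and> S i \<le> 1" if "i \<le> k + 1" for i
    proof -
      have "S 0 \<le> S i" "S i \<le> S (k+1)" using Smono[of 0 i] Smono[of i "k+1"] that by auto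
      moreover have "S 0 = 0" "S (k+1) = 1" unfolding S_def by auto
      ultimately show ?thesis by simp
    qed
    define LP where "LP = concat (map (\<lambda>i. map (\<lambda>a. (a, S i)) (v i)) I)"
    define ts where "ts = map snd LP"
    have wLP: "w = map fst LP" unfolding LP_def w_def by (simp add: map_concat o_def)
    have zLP: "zip w ts = LP" unfolding wLP ts_def by (simp add: zip_map_fst_snd)
    have tsr: "ts = concat (map (\<lambda>i. replicate (length (v i)) (S i)) I)"
      unfolding ts_def LP_def by (simp add: map_concat o_def map_replicate_const)
    have tsTS: "ts \<in> TS"
    proof -
      have "length ts = n" using lw wLP unfolding ts_def by simp
      moreover have "sorted ts" unfolding tsr
      proof (rule sorted_concat_rep)
        show "sorted I" unfolding I_def by (rule sorted_upt)
        fix i j assume ij: "i \<in> set I" "j \<in> set I" "i \<le> j"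
        have "j < k + 2" using ij(2) unfolding I_def set_upt by (simp only: atLeastLessThan_iff)
        then show "S i \<le> S j" using Smono[OF ij(3)] by simp
      qed
      moreover have "\<forall>t\<in>set ts. 0 \<le> t \<and> t \<le> 1" unfolding tsr I_def using S01 by (auto split: if_splits)
      ultimately show ?thesis unfolding TS_def by simp
    qed
    have filt: "map fst (filter (\<lambda>p. snd p = r) LP) = concat (map (\<lambda>i. if S i = r then v i else []) I)" for r
      unfolding LP_def by (simp add: filter_concat map_concat o_def filter_const_pair)
    have PWr: "PW w ts r = wprod G (map (\<lambda>i. xs ! i) (filter (\<lambda>i. S i = r) I))" if "0 \<le> r" "r \<le> 1" for r
    proof -
      have "PW w ts r = wprod G (concat (map (\<lambda>i. if S i = r then v i else []) I))"
        unfolding PW_in[OF that] zLP filt ..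
      also have "\<dots> = wprod G (map (\<lambda>i. wprod G (v i)) (filter (\<lambda>i. S i = r) I))"
        by (rule wprod_concat_if) (use vC in auto)
      also have "map (\<lambda>i. wprod G (v i)) (filter (\<lambda>i. S i = r) I) = map (\<lambda>i. xs ! i) (filter (\<lambda>i. S i = r) I)"
      proof (rule map_cong[OF refl])
        fix x assume "x \<in> set (filter (\<lambda>i. S i = r) I)"
        then have "x \<in> set I" by simp
        then have "x < k + 2" unfolding I_def set_upt by (simp only: atLeastLessThan_iff)
        then show "wprod G (v x) = xs ! x" using v by blast
      qed
      finally show ?thesis .
    qed
    define mid where "mid = (\<lambda>r. wprod G (map (\<lambda>i. xs ! i) (filter (\<lambda>i. s i = r) [1..<k+1])))"
    have fS: "filter (\<lambda>i. S i = r) [1..<k+1] = filter (\<lambda>i. s i = r) [1..<k+1]" for r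
      by (rule filter_cong) (auto simp: S_def)
    have ua: "[0..<k+2] = [0..<k+1] @ [k+1]" by simp
    have ub: "[0..<k+1] = 0 # [1..<k+1]" using upt_conv_Cons[of 0 "k+1"] by (simp del: upt_Suc)
    have Isp: "I = [0] @ [1..<k+1] @ [k+1]" unfolding I_def ua ub by simp
    have midc: "mid r \<in> carrier G" for r unfolding mid_def
      by (rule wprod_closed) (use xsM Mon_carrier in auto)
    have x0c: "xs ! 0 \<in> carrier G" "xs ! (k+1) \<in> carrier G" using xsM Mon_carrier by auto
    have "u = PW w ts"
    proof
      fix r
      have cm: "char_map G xs s r = (if r = 0 then xs ! 0 \<otimes> mid r else if r = 1 then mid r \<otimes> xs ! (k+1)
          else if 0 < r \<and> r < 1 then mid r else \<one>)"
        unfolding char_map_def Let_def mid_def k_def ..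
      have wp3: "wprod G (map (\<lambda>i. xs ! i) (filter (\<lambda>i. S i = r) I))
          = wprod G (map (\<lambda>i. xs ! i) (filter (\<lambda>i. S i = r) [0])) \<otimes> (mid r \<otimes>
            wprod G (map (\<lambda>i. xs ! i) (filter (\<lambda>i. S i = r) [k+1])))"
      proof -
        define a0 where "a0 = map (\<lambda>i. xs ! i) (filter (\<lambda>i. S i = r) [0])"
        define m where "m = map (\<lambda>i. xs ! i) (filter (\<lambda>i. S i = r) [1..<k+1])"
        define a1 where "a1 = map (\<lambda>i. xs ! i) (filter (\<lambda>i. S i = r) [k+1])"
        have cc: "set (map (\<lambda>i. xs ! i) J) \<subseteq> carrier G" if "\<forall>i\<in>set J. i < k + 2" for J
        proof
          fix x assume "x \<in> set (map (\<lambda>i. xs ! i) J)"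
          then obtain i where "i \<in> set J" "x = xs ! i" by auto
          then show "x \<in> carrier G" using that xsM Mon_carrier by blast
        qed
        have ca0: "set a0 \<subseteq> carrier G" unfolding a0_def by (rule cc) simp
        have cm: "set m \<subseteq> carrier G" unfolding m_def
        proof (rule cc, intro ballI)
          fix i assume "i \<in> set (filter (\<lambda>i. S i = r) [1..<k+1])"
          then have "i \<in> set [1..<k+1]" by (rule subsetD[OF filter_is_subset])
          then have "1 \<le> i \<and> i < k + 1" unfolding set_upt by (simp only: atLeastLessThan_iff)
          then show "i < k + 2" by linarith
        qed
        have ca1: "set a1 \<subseteq> carrier G" unfolding a1_def by (rule cc) simp
        have "wprod G (map (\<lambda>i. xs ! i) (filter (\<lambda>i. S i = r) I)) = wprod G (a0 @ m @ a1)"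
          unfolding a0_def m_def a1_def by (subst Isp) simp
        also have "\<dots> = wprod G a0 \<otimes> wprod G (m @ a1)" using ca0 cm ca1 by (intro wprod_append) auto
        also have "wprod G (m @ a1) = wprod G m \<otimes> wprod G a1" using cm ca1 by (intro wprod_append) auto
        finally have "wprod G (map (\<lambda>i. xs ! i) (filter (\<lambda>i. S i = r) I)) = wprod G a0 \<otimes> (wprod G m \<otimes> wprod G a1)" .
        then show ?thesis unfolding a0_def m_def a1_def mid_def fS .
      qed
      have S0: "S 0 = 0" and Sk: "S (k+1) = 1" unfolding S_def by auto
      consider "r < 0" | "r = 0" | "0 < r \<and> r < 1" | "r = 1" | "1 < r" by linarith
      then show "u r = PW w ts r"
      proof cases
        case 1 then show ?thesis unfolding u cm using PW_out by simp
      next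
        case 2
        then have "0 \<le> r" "r \<le> 1" by auto
        then show ?thesis unfolding u cm PWr[OF \<open>0 \<le> r\<close> \<open>r \<le> 1\<close>] wp3 using 2 S0 Sk x0c midc by simp
      next
        case 3
        then have "0 \<le> r" "r \<le> 1" by auto
        then show ?thesis unfolding u cm PWr[OF \<open>0 \<le> r\<close> \<open>r \<le> 1\<close>] wp3 using 3 S0 Sk x0c midc by simp
      next
        case 4
        then have "0 \<le> r" "r \<le> 1" by auto
        then show ?thesis unfolding u cm PWr[OF \<open>0 \<le> r\<close> \<open>r \<le> 1\<close>] wp3 using 4 S0 Sk x0c midc by simp
      next
        case 5 then show ?thesis unfolding u cm using PW_out by simp
      qed
    qed
    then show "u \<in> PW w ` TS" using tsTS by blast
  qed
  then show ?thesis using wW by blast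
qed

end

lemma sum_count_list: assumes "finite A" "set xs \<subseteq> A"
  shows "(\<Sum>r\<in>A. count_list xs r) = length xs"
  using assms(2)
proof (induction xs)
  case Nil then show ?case by simp
next
  case (Cons x xs)
  have "(\<Sum>r\<in>A. count_list (x # xs) r) = (\<Sum>r\<in>A. (if x = r then 1 else 0) + count_list xs r)"
    by (rule sum.cong) auto
  also have "\<dots> = (\<Sum>r\<in>A. if x = r then 1 else 0) + (\<Sum>r\<in>A. count_list xs r)"
    by (rule sum.distrib)
  also have "(\<Sum>r\<in>A. if x = r then 1 else 0) = (1::nat)" using Cons.prems assms(1) by (simp add: sum.delta)
  finally show ?case using Cons by simp
qed

lemma filter_eq_distinct: "distinct l \<Longrightarrow> filter (\<lambda>t. t = r) l = (if r \<in> set l then [r] else [])"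
  by (induction l) (auto simp: filter_empty_conv)

lemma concat_filter_blocks: fixes L :: "('b \<times> real) list"
  assumes "sorted R" "distinct R" "set (map snd L) \<subseteq> set R" "sorted (map snd L)"
  shows "concat (map (\<lambda>r. filter (\<lambda>p. snd p = r) L) R) = L"
  using assms
proof (induction R arbitrary: L)
  case Nil then show ?case by simp
next
  case (Cons r R)
  have rl: "\<forall>q\<in>set R. r < q" using Cons.prems(1,2) by (auto simp: less_le)
  have ge: "\<forall>p\<in>set L. r \<le> snd p" using Cons.prems(3) rl by force
  have fA: "filter (\<lambda>p. snd p < r) L = []" using ge by (auto simp: filter_empty_conv)
  define L' where "L' = filter (\<lambda>p. r < snd p) L"
  have sp: "L = filter (\<lambda>p. snd p = r) L @ L'"
    using split3[of snd L r] Cons.prems(4) fA unfolding L'_def by simp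
  have L'R: "set (map snd L') \<subseteq> set R" using Cons.prems(3) unfolding L'_def by auto
  have L's: "sorted (map snd L')" unfolding L'_def using Cons.prems(4) by (rule sorted_filter)
  have eq: "filter (\<lambda>p. snd p = q) L = filter (\<lambda>p. snd p = q) L'" if "q \<in> set R" for q
  proof -
    have "filter (\<lambda>p. snd p = q) (filter (\<lambda>p. snd p = r) L) = []" using rl that by (auto simp: filter_empty_conv)
    then show ?thesis by (subst sp) simp
  qed
  have "concat (map (\<lambda>q. filter (\<lambda>p. snd p = q) L) R) = concat (map (\<lambda>q. filter (\<lambda>p. snd p = q) L') R)"
    using eq by (metis (no_types, lifting) map_eq_conv)
  also have "\<dots> = L'" using Cons.IH[OF _ _ L'R L's] Cons.prems(1,2) by simp
  finally show ?case using sp by simp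
qed

context wsetup_g
begin

lemma WFact_cell: assumes u: "u \<in> WFact G X g"
  shows "u \<in> W_cell G (Pfact G u)" "lin_fact G X g (Pfact G u)"
proof -
  show lf: "lin_fact G X g (Pfact G u)" using u unfolding WFact_def by simp
  have out: "\<And>r. r < 0 \<or> 1 < r \<Longrightarrow> u r = \<one>" and fin: "finite (wsupp G u)" using u unfolding WFact_def by auto
  define Sp where "Sp = sorted_list_of_set (wsupp G u)"
  define kk where "kk = length Sp"
  define xs where "xs = Pfact G u"
  have xsd: "xs = [u 0] @ map u Sp @ [u 1]" unfolding xs_def Pfact_def Sp_def ..
  have k: "length xs - 2 = kk" unfolding xsd kk_def by (cases Sp) simp_all
  have Spset: "set Sp = wsupp G u" unfolding Sp_def using fin by simp
  have Spd: "distinct Sp" "sorted Sp" unfolding Sp_def by auto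
  have xsMon: "set xs \<subseteq> Mon G X" using lf unfolding lin_fact_def xs_def by simp
  have uc: "u 0 \<in> carrier G" "u 1 \<in> carrier G" using xsMon Mon_carrier unfolding xsd by auto
  define s where "s = (\<lambda>i. Sp ! (i - 1))"
  have mapeq: "map (\<lambda>i. (xs ! i, s i)) [1..<kk+1] = map (\<lambda>t. (u t, t)) Sp"
  proof (rule nth_equalityI)
    show "length (map (\<lambda>i. (xs ! i, s i)) [1..<kk+1]) = length (map (\<lambda>t. (u t, t)) Sp)" unfolding kk_def by (simp del: upt_Suc)
    fix j assume "j < length (map (\<lambda>i. (xs ! i, s i)) [1..<kk+1])"
    then have j: "j < kk" by (simp del: upt_Suc)
    have "map (\<lambda>i. (xs ! i, s i)) [1..<kk+1] ! j = (xs ! (1 + j), s (1 + j))"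
      using j by (subst nth_map_upt) auto
    moreover have "xs ! (1 + j) = u (Sp ! j)" unfolding xsd using j unfolding kk_def by (simp add: nth_append)
    ultimately show "map (\<lambda>i. (xs ! i, s i)) [1..<kk+1] ! j = map (\<lambda>t. (u t, t)) Sp ! j"
      unfolding s_def using j unfolding kk_def by simp
  qed
  have mid: "map (\<lambda>i. xs ! i) (filter (\<lambda>i. s i = r) [1..<kk+1]) = map u (filter (\<lambda>t. t = r) Sp)" for r
  proof -
    have "map (\<lambda>i. xs ! i) (filter (\<lambda>i. s i = r) [1..<kk+1])
        = map fst (filter (\<lambda>p. snd p = r) (map (\<lambda>i. (xs ! i, s i)) [1..<kk+1]))"
      by (simp add: filter_map o_def)
    also have "\<dots> = map fst (filter (\<lambda>p. snd p = r) (map (\<lambda>t. (u t, t)) Sp))" unfolding mapeq ..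
    also have "\<dots> = map u (filter (\<lambda>t. t = r) Sp)" by (simp add: filter_map o_def)
    finally show ?thesis .
  qed
  have midv: "wprod G (map (\<lambda>i. xs ! i) (filter (\<lambda>i. s i = r) [1..<kk+1])) = (if r \<in> wsupp G u then u r else \<one>)" for r
  proof -
    have "wprod G (map (\<lambda>i. xs ! i) (filter (\<lambda>i. s i = r) [1..<kk+1])) = wprod G (map u (if r \<in> set Sp then [r] else []))"
      unfolding mid filter_eq_distinct[OF Spd(1)] ..
    moreover have "r \<in> wsupp G u \<Longrightarrow> u r \<in> carrier G"
    proof -
      assume "r \<in> wsupp G u"
      then have "u r \<in> set xs" unfolding xsd using Spset by auto
      then show ?thesis using xsMon Mon_carrier by blast
    qed
    ultimately show ?thesis using Spset by auto
  qed
  have eq: "u = char_map G xs s"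
  proof
    fix r
    have cm: "char_map G xs s r = (if r = 0 then u 0 \<otimes> (if r \<in> wsupp G u then u r else \<one>)
       else if r = 1 then (if r \<in> wsupp G u then u r else \<one>) \<otimes> u 1
       else if 0 < r \<and> r < 1 then (if r \<in> wsupp G u then u r else \<one>) else \<one>)"
    proof -
      have x0: "xs ! 0 = u 0" unfolding xsd by simp
      have x1: "xs ! (kk + 1) = u 1" unfolding xsd kk_def by (simp add: nth_append)
      show ?thesis unfolding char_map_def Let_def k midv x0 x1 ..
    qed
    consider "r < 0" | "r = 0" | "0 < r \<and> r < 1" | "r = 1" | "1 < r" by linarith
    then show "u r = char_map G xs s r"
    proof cases
      case 1 then show ?thesis unfolding cm using out by simp
    next
      case 2 then show ?thesis unfolding cm using uc unfolding wsupp_def by simp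
    next
      case 3 then show ?thesis unfolding cm unfolding wsupp_def by auto
    next
      case 4 then show ?thesis unfolding cm using uc unfolding wsupp_def by simp
    next
      case 5 then show ?thesis unfolding cm using out by simp
    qed
  qed
  have Sp01: "0 < Sp ! i \<and> Sp ! i < 1" if "i < kk" for i
  proof -
    have "Sp ! i \<in> wsupp G u" using that Spset unfolding kk_def by (metis nth_mem)
    then show ?thesis unfolding wsupp_def by simp
  qed
  have cons: "(kk > 0 \<longrightarrow> 0 \<le> s 1 \<and> s kk \<le> 1) \<and> (\<forall>i. 1 \<le> i \<and> i < kk \<longrightarrow> s i \<le> s (Suc i))"
  proof (intro conjI impI allI)
    assume "kk > 0"
    then show "0 \<le> s 1" "s kk \<le> 1" unfolding s_def using Sp01[of 0] Sp01[of "kk - 1"] by auto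
  next
    fix i assume "1 \<le> i \<and> i < kk"
    then show "s i \<le> s (Suc i)" unfolding s_def using Spd(2) unfolding kk_def
      by (simp add: sorted_iff_nth_mono)
  qed
  have cons': "let k = length xs - 2 in (k > 0 \<longrightarrow> 0 \<le> s 1 \<and> s k \<le> 1) \<and> (\<forall>i. 1 \<le> i \<and> i < k \<longrightarrow> s i \<le> s (Suc i))"
    unfolding Let_def k by (rule cons)
  have "char_map G xs s \<in> W_cell G xs" unfolding W_cell_def mem_Collect_eq
    by (rule exI[of _ s], rule conjI[OF refl cons'])
  then show "u \<in> W_cell G (Pfact G u)" using eq unfolding xs_def by simp
qed

end

context wsetup_g
begin

lemma PW_WFact: assumes w: "w \<in> Words" and ts: "ts \<in> TS"
  shows "PW w ts \<in> WFact G X g"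
proof -
  define u where "u = PW w ts"
  have out: "\<forall>r. (r < 0 \<or> r > 1) \<longrightarrow> u r = \<one>" unfolding u_def using PW_out by auto
  have supp_ts: "r \<in> set ts" if "0 \<le> r" "r \<le> 1" "u r \<noteq> \<one>" for r
  proof (rule ccontr)
    assume "r \<notin> set ts"
    then have "count_list ts r = 0" by (simp add: count_list_0_iff)
    then have "pB ts r = 0" using count_pB[of ts r] unfolding count_mset by simp
    then have "wlen G X (u r) = 0" using PW_block(2)[OF w ts that(1,2)] unfolding u_def by simp
    then show False using wlen_zero[OF PW_block(3)[OF w ts that(1,2)]] that(3) unfolding u_def by simp
  qed
  have ws: "wsupp G u \<subseteq> set ts" using supp_ts unfolding wsupp_def by force
  have fin: "finite (wsupp G u)" using finite_subset[OF ws] by simp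
  define Sp where "Sp = sorted_list_of_set (wsupp G u)"
  define R where "R = [0] @ Sp @ [1::real]"
  have Spset: "set Sp = wsupp G u" unfolding Sp_def using fin by simp
  have Spd: "distinct Sp" "sorted Sp" unfolding Sp_def by auto
  have Sp01: "0 < t \<and> t < 1" if "t \<in> set Sp" for t using that Spset unfolding wsupp_def by auto
  have Rd: "distinct R" unfolding R_def using Spd Sp01 by auto
  have Rs: "sorted R" unfolding R_def using Spd Sp01 by (auto simp: sorted_append less_imp_le)
  have R01: "0 \<le> r \<and> r \<le> 1" if "r \<in> set R" for r using that Sp01 unfolding R_def by force
  have tsR: "set ts \<subseteq> set R"
  proof
    fix r assume r: "r \<in> set ts"
    then have r01: "0 \<le> r" "r \<le> 1" using ts unfolding TS_def by auto
    show "r \<in> set R"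
    proof (cases "r = 0 \<or> r = 1")
      case True then show ?thesis unfolding R_def by auto
    next
      case False
      have "count_list ts r \<noteq> 0" using r by (simp add: count_list_0_iff)
      then have "pB ts r \<noteq> 0" using count_pB[of ts r] unfolding count_mset by simp
      then have "wlen G X (u r) \<noteq> 0" using PW_block(2)[OF w ts r01] unfolding u_def by simp
      then have "u r \<noteq> \<one>" by auto
      then have "r \<in> wsupp G u" unfolding wsupp_def using False r01 by auto
      then show ?thesis unfolding R_def using Spset by auto
    qed
  qed
  have Pf: "Pfact G u = map u R" unfolding Pfact_def R_def Sp_def by simp
  have uM: "u r \<in> Mon G X" if "r \<in> set R" for r using PW_block(3)[OF w ts] R01[OF that] unfolding u_def by blast
  have l1: "2 \<le> length (Pfact G u)" unfolding Pf R_def by simp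
  have l2: "set (Pfact G u) \<subseteq> Mon G X" unfolding Pf using uM by auto
  have l3: "\<forall>i. 0 < i \<and> i < length (Pfact G u) - 1 \<longrightarrow> Pfact G u ! i \<noteq> \<one>"
  proof (intro allI impI)
    fix i assume i: "0 < i \<and> i < length (Pfact G u) - 1"
    then have i': "i - 1 < length Sp" unfolding Pf R_def by auto
    have "Pfact G u ! i = u (Sp ! (i - 1))" unfolding Pf R_def using i i'
      by (cases i) (auto simp: nth_append)
    moreover have "Sp ! (i - 1) \<in> wsupp G u" using i' Spset nth_mem by blast
    ultimately show "Pfact G u ! i \<noteq> \<one>" unfolding wsupp_def by simp
  qed
  have l4: "(\<Sum>x\<leftarrow>Pfact G u. wlen G X x) = n"
  proof -
    have "(\<Sum>x\<leftarrow>Pfact G u. wlen G X x) = (\<Sum>r\<leftarrow>R. wlen G X (u r))" unfolding Pf by (simp add: o_def)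
    also have "\<dots> = (\<Sum>r\<in>set R. wlen G X (u r))" using Rd by (rule sum_list_distinct_conv_sum_set)
    also have "\<dots> = (\<Sum>r\<in>set R. count_list ts r)"
    proof (rule sum.cong[OF refl])
      fix r assume "r \<in> set R"
      then have "wlen G X (u r) = pB ts r" using PW_block(2)[OF w ts] R01 unfolding u_def by blast
      then show "wlen G X (u r) = count_list ts r" using count_pB[of ts r] unfolding count_mset by simp
    qed
    also have "\<dots> = length ts" by (rule sum_count_list) (use tsR in auto)
    finally show ?thesis using TS_len[OF ts] by simp
  qed
  have l5: "wprod G (Pfact G u) = g"
  proof -
    define L where "L = zip w ts"
    have lw: "length w = length ts" using Words_len[OF w] TS_len[OF ts] by simp
    have mL: "map snd L = ts" "map fst L = w" unfolding L_def using lw by auto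
    have ur: "u r = wprod G (map fst (filter (\<lambda>p. snd p = r) L))" if "r \<in> set R" for r
      unfolding u_def L_def using PW_in R01[OF that] by blast
    have wX: "w \<in> lists X" using Words_lists[OF w] .
    have bc: "set (map fst (filter (\<lambda>p. snd p = r) L)) \<subseteq> carrier G" for r
    proof -
      have "set (map fst (filter (\<lambda>p. snd p = r) L)) \<subseteq> set (map fst L)" by auto
      then show ?thesis using mL(2) lists_X_carrier[OF wX] by simp
    qed
    have "wprod G (Pfact G u) = wprod G (map (\<lambda>r. wprod G (map fst (filter (\<lambda>p. snd p = r) L))) R)"
      unfolding Pf using ur by (metis (mono_tags, lifting) map_eq_conv)
    also have "\<dots> = wprod G (map (wprod G) (map (\<lambda>r. map fst (filter (\<lambda>p. snd p = r) L)) R))"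
      by (simp add: o_def)
    also have "\<dots> = wprod G (concat (map (\<lambda>r. map fst (filter (\<lambda>p. snd p = r) L)) R))"
    proof (rule wprod_concat[symmetric])
      fix l assume "l \<in> set (map (\<lambda>r. map fst (filter (\<lambda>p. snd p = r) L)) R)"
      then obtain r where "l = map fst (filter (\<lambda>p. snd p = r) L)" by auto
      then show "set l \<subseteq> carrier G" using bc by simp
    qed
    also have "concat (map (\<lambda>r. map fst (filter (\<lambda>p. snd p = r) L)) R) = map fst (concat (map (\<lambda>r. filter (\<lambda>p. snd p = r) L) R))"
      by (simp add: map_concat o_def)
    also have "concat (map (\<lambda>r. filter (\<lambda>p. snd p = r) L) R) = L"
      by (rule concat_filter_blocks[OF Rs Rd]) (use mL tsR TS_sorted[OF ts] in auto)
    finally show ?thesis using mL Words_prod[OF w] by simp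
  qed
  have "lin_fact G X g (Pfact G u)" unfolding lin_fact_def using l1 l2 l3 l4 l5 by simp
  then show ?thesis unfolding WFact_def u_def[symmetric] using out fin by simp
qed

end

context wsetup_g
begin

lemma O_points_char: "O_points G X g = {PO w ts | w ts. w \<in> Words \<and> ts \<in> TS}"
proof (intro equalityI subsetI)
  fix lam assume "lam \<in> O_points G X g"
  then obtain C where C: "C \<in> max_chains G X g" "lam \<in> osimplex C" unfolding O_points_def by blast
  obtain w where w: "w \<in> Words" "C = Cw w" using maxc_Cw[OF C(1)] by blast
  obtain ts where "ts \<in> TS" "lam = PO w ts" using C(2) osimplex_Cw[OF w(1)] w(2) by blast
  then show "lam \<in> {PO w ts | w ts. w \<in> Words \<and> ts \<in> TS}" using w by blast
next
  fix lam assume "lam \<in> {PO w ts | w ts. w \<in> Words \<and> ts \<in> TS}"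
  then obtain w ts where w: "w \<in> Words" "ts \<in> TS" "lam = PO w ts" by blast
  then have "lam \<in> osimplex (Cw w)" using osimplex_Cw[OF w(1)] by blast
  then show "lam \<in> O_points G X g" unfolding O_points_def using Cw_max[OF w(1)] by blast
qed

lemma WFact_char: "WFact G X g = {PW w ts | w ts. w \<in> Words \<and> ts \<in> TS}"
proof (intro equalityI subsetI)
  fix u assume u: "u \<in> WFact G X g"
  obtain w where w: "w \<in> Words" "W_cell G (Pfact G u) \<subseteq> PW w ` TS" using refine[OF WFact_cell(2)[OF u]] by blast
  then obtain ts where "ts \<in> TS" "u = PW w ts" using WFact_cell(1)[OF u] by blast
  then show "u \<in> {PW w ts | w ts. w \<in> Words \<and> ts \<in> TS}" using w by blast
next
  fix u assume "u \<in> {PW w ts | w ts. w \<in> Words \<and> ts \<in> TS}"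
  then obtain w ts where "w \<in> Words" "ts \<in> TS" "u = PW w ts" by blast
  then show "u \<in> WFact G X g" using PW_WFact by blast
qed

definition fmap :: "('a \<Rightarrow> real) \<Rightarrow> (real \<Rightarrow> 'a)" where
  "fmap lam = (let p = (SOME p. fst p \<in> Words \<and> snd p \<in> TS \<and> PO (fst p) (snd p) = lam) in PW (fst p) (snd p))"

lemma O_points_E: assumes "lam \<in> O_points G X g" obtains w ts where "w \<in> Words" "ts \<in> TS" "lam = PO w ts"
  using assms[unfolded O_points_char] by blast

lemma O_points_I: "w \<in> Words \<Longrightarrow> ts \<in> TS \<Longrightarrow> PO w ts \<in> O_points G X g"
  unfolding O_points_char by blast

lemma WFact_E: assumes "u \<in> WFact G X g" obtains w ts where "w \<in> Words" "ts \<in> TS" "u = PW w ts"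
  using assms[unfolded WFact_char] by blast

lemma fmap_PO: assumes w: "w \<in> Words" and ts: "ts \<in> TS" shows "fmap (PO w ts) = PW w ts"
proof -
  define p where "p = (SOME p. fst p \<in> Words \<and> snd p \<in> TS \<and> PO (fst p) (snd p) = PO w ts)"
  have "\<exists>p. fst p \<in> Words \<and> snd p \<in> TS \<and> PO (fst p) (snd p) = PO w ts"
    using w ts by (intro exI[of _ "(w, ts)"]) simp
  then have "fst p \<in> Words \<and> snd p \<in> TS \<and> PO (fst p) (snd p) = PO w ts"
    unfolding p_def by (rule someI_ex)
  then have p: "fst p \<in> Words" "snd p \<in> TS" "PO (fst p) (snd p) = PO w ts" by auto
  have "PW (fst p) (snd p) = PW w ts" using PO_PW_iff[OF p(1) w p(2) ts] p(3) by simp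
  then show ?thesis unfolding fmap_def Let_def p_def[symmetric] .
qed

lemma fmap_inj: "inj_on fmap (O_points G X g)"
proof (rule inj_onI)
  fix a b assume a: "a \<in> O_points G X g" and b: "b \<in> O_points G X g" and e: "fmap a = fmap b"
  obtain w ts where wa: "w \<in> Words" "ts \<in> TS" "a = PO w ts" using a by (rule O_points_E)
  obtain w' ts' where wb: "w' \<in> Words" "ts' \<in> TS" "b = PO w' ts'" using b by (rule O_points_E)
  have "PW w ts = PW w' ts'" using e fmap_PO wa wb by simp
  then show "a = b" using PO_PW_iff[OF wa(1) wb(1) wa(2) wb(2)] wa wb by simp
qed

lemma fmap_image: "fmap ` O_points G X g = WFact G X g"
proof (intro equalityI subsetI)
  fix u assume "u \<in> fmap ` O_points G X g"
  then obtain lam where lam: "lam \<in> O_points G X g" "u = fmap lam" by blast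
  obtain w ts where w: "w \<in> Words" "ts \<in> TS" "lam = PO w ts" using lam(1) by (rule O_points_E)
  have "u = PW w ts" using lam(2) w fmap_PO by simp
  then show "u \<in> WFact G X g" using PW_WFact w by simp
next
  fix u assume "u \<in> WFact G X g"
  then obtain w ts where w: "w \<in> Words" "ts \<in> TS" "u = PW w ts" by (rule WFact_E)
  then have "PO w ts \<in> O_points G X g" using O_points_I by blast
  moreover have "u = fmap (PO w ts)" using fmap_PO[OF w(1,2)] w(3) by simp
  ultimately show "u \<in> fmap ` O_points G X g" by (intro image_eqI[of u fmap "PO w ts"])
qed

definition finv :: "(real \<Rightarrow> 'a) \<Rightarrow> ('a \<Rightarrow> real)" where
  "finv = inv_into (O_points G X g) fmap"

lemma finv_PW: assumes w: "w \<in> Words" and ts: "ts \<in> TS" shows "finv (PW w ts) = PO w ts"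
proof -
  have "PO w ts \<in> O_points G X g" using O_points_I w ts by blast
  from inv_into_f_f[OF fmap_inj this] show ?thesis unfolding finv_def fmap_PO[OF w ts] .
qed

definition wC :: "'a set \<Rightarrow> 'a list" where
  "wC C = (SOME w. w \<in> Words \<and> C = Cw w)"

lemma wC: "C \<in> max_chains G X g \<Longrightarrow> wC C \<in> Words \<and> C = Cw (wC C)"
  unfolding wC_def using maxc_Cw by (metis (mono_tags, lifting) someI_ex)

definition wR :: "'a list \<Rightarrow> 'a list" where
  "wR xs = (SOME w. w \<in> Words \<and> W_cell G xs \<subseteq> PW w ` TS)"

lemma wR: "lin_fact G X g xs \<Longrightarrow> wR xs \<in> Words \<and> W_cell G xs \<subseteq> PW (wR xs) ` TS"
  unfolding wR_def using refine by (metis (mono_tags, lifting) someI_ex)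

lemma dist_sets:
  assumes p: "p \<in> O_points G X g" and q: "q \<in> O_points G X g"
  shows "{len. \<exists>ps cs.
      length ps = Suc (length cs) \<and> ps ! 0 = p \<and> last ps = q \<and>
      (\<forall>i < length cs. cs ! i \<in> max_chains G X g \<and> ps ! i \<in> osimplex (cs ! i) \<and> ps ! Suc i \<in> osimplex (cs ! i)) \<and>
      len = (\<Sum>i < length cs. O_cell_dist G X g (cs ! i) (ps ! i) (ps ! Suc i))}
    = {len. \<exists>ps cs.
      length ps = Suc (length cs) \<and> ps ! 0 = fmap p \<and> last ps = fmap q \<and>
      (\<forall>i < length cs. cs ! i \<in> {xs. lin_fact G X g xs} \<and> ps ! i \<in> W_cell G (cs ! i) \<and> ps ! Suc i \<in> W_cell G (cs ! i)) \<and>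
      len = (\<Sum>i < length cs. W_cell_dist G X g (cs ! i) (ps ! i) (ps ! Suc i))}"
proof (intro equalityI subsetI)
  fix len assume "len \<in> {len. \<exists>ps cs.
      length ps = Suc (length cs) \<and> ps ! 0 = p \<and> last ps = q \<and>
      (\<forall>i < length cs. cs ! i \<in> max_chains G X g \<and> ps ! i \<in> osimplex (cs ! i) \<and> ps ! Suc i \<in> osimplex (cs ! i)) \<and>
      len = (\<Sum>i < length cs. O_cell_dist G X g (cs ! i) (ps ! i) (ps ! Suc i))}"
  then obtain ps cs where l: "length ps = Suc (length cs)" and p0: "ps ! 0 = p" and pl: "last ps = q"
    and cells: "\<forall>i < length cs. cs ! i \<in> max_chains G X g \<and> ps ! i \<in> osimplex (cs ! i) \<and> ps ! Suc i \<in> osimplex (cs ! i)"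
    and len: "len = (\<Sum>i < length cs. O_cell_dist G X g (cs ! i) (ps ! i) (ps ! Suc i))" by blast
  define ps' where "ps' = map fmap ps"
  define cs' where "cs' = map (\<lambda>C. [\<one>] @ wC C @ [\<one>]) cs"
  have nn: "ps \<noteq> []" using l by auto
  have A: "length ps' = Suc (length cs')" unfolding ps'_def cs'_def using l by simp
  have B: "ps' ! 0 = fmap p" unfolding ps'_def using p0 nn by simp
  have C: "last ps' = fmap q" unfolding ps'_def using pl nn by (simp add: last_map)
  have D: "cs' ! i \<in> {xs. lin_fact G X g xs} \<and> ps' ! i \<in> W_cell G (cs' ! i) \<and> ps' ! Suc i \<in> W_cell G (cs' ! i)
     \<and> O_cell_dist G X g (cs ! i) (ps ! i) (ps ! Suc i) = W_cell_dist G X g (cs' ! i) (ps' ! i) (ps' ! Suc i)"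
    if i: "i < length cs" for i
  proof -
    have Ci: "cs ! i \<in> max_chains G X g" using cells i by blast
    define w where "w = wC (cs ! i)"
    have w: "w \<in> Words" "cs ! i = Cw w" using wC[OF Ci] unfolding w_def by auto
    obtain ts where ts: "ts \<in> TS" "ps ! i = PO w ts" using cells i w osimplex_Cw[OF w(1)] by force
    obtain ts' where ts': "ts' \<in> TS" "ps ! Suc i = PO w ts'" using cells i w osimplex_Cw[OF w(1)] by force
    have c': "cs' ! i = [\<one>] @ w @ [\<one>]" unfolding cs'_def w_def using i by simp
    have p1: "ps' ! i = PW w ts" unfolding ps'_def using i l ts fmap_PO[OF w(1)] by simp
    have p2: "ps' ! Suc i = PW w ts'" unfolding ps'_def using i l ts' fmap_PO[OF w(1)] by simp
    show ?thesis unfolding c' p1 p2 using lin_fact_letters[OF w(1)] PW_in_cell[OF w(1)] ts ts'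
      O_cell_dist_PO[OF w(1) ts(1) ts'(1)] W_cell_dist_PW[OF w(1) w(1) ts(1) ts'(1)] w(2) by simp
  qed
  have lc: "length cs' = length cs" unfolding cs'_def by simp
  have "len = (\<Sum>i < length cs. W_cell_dist G X g (cs' ! i) (ps' ! i) (ps' ! Suc i))"
    unfolding len by (rule sum.cong[OF refl]) (use D in blast)
  then have E: "len = (\<Sum>i < length cs'. W_cell_dist G X g (cs' ! i) (ps' ! i) (ps' ! Suc i))"
    unfolding lc .
  have D': "\<forall>i < length cs'. cs' ! i \<in> {xs. lin_fact G X g xs} \<and> ps' ! i \<in> W_cell G (cs' ! i) \<and> ps' ! Suc i \<in> W_cell G (cs' ! i)"
    unfolding lc using D by blast
  show "len \<in> {len. \<exists>ps cs.
      length ps = Suc (length cs) \<and> ps ! 0 = fmap p \<and> last ps = fmap q \<and>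
      (\<forall>i < length cs. cs ! i \<in> {xs. lin_fact G X g xs} \<and> ps ! i \<in> W_cell G (cs ! i) \<and> ps ! Suc i \<in> W_cell G (cs ! i)) \<and>
      len = (\<Sum>i < length cs. W_cell_dist G X g (cs ! i) (ps ! i) (ps ! Suc i))}"
    by (intro CollectI exI[of _ ps'] exI[of _ cs'] conjI A B C D' E)
next
  fix len assume "len \<in> {len. \<exists>ps cs.
      length ps = Suc (length cs) \<and> ps ! 0 = fmap p \<and> last ps = fmap q \<and>
      (\<forall>i < length cs. cs ! i \<in> {xs. lin_fact G X g xs} \<and> ps ! i \<in> W_cell G (cs ! i) \<and> ps ! Suc i \<in> W_cell G (cs ! i)) \<and>
      len = (\<Sum>i < length cs. W_cell_dist G X g (cs ! i) (ps ! i) (ps ! Suc i))}"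
  then obtain ps cs where l: "length ps = Suc (length cs)" and p0: "ps ! 0 = fmap p" and pl: "last ps = fmap q"
    and cells: "\<forall>i < length cs. cs ! i \<in> {xs. lin_fact G X g xs} \<and> ps ! i \<in> W_cell G (cs ! i) \<and> ps ! Suc i \<in> W_cell G (cs ! i)"
    and len: "len = (\<Sum>i < length cs. W_cell_dist G X g (cs ! i) (ps ! i) (ps ! Suc i))" by blast
  define ps' where "ps' = map finv ps"
  define cs' where "cs' = map (\<lambda>xs. Cw (wR xs)) cs"
  have nn: "ps \<noteq> []" using l by auto
  have fi: "finv (fmap x) = x" if "x \<in> O_points G X g" for x
    unfolding finv_def using inv_into_f_f[OF fmap_inj that] .
  have A: "length ps' = Suc (length cs')" unfolding ps'_def cs'_def using l by simp
  have B: "ps' ! 0 = p" unfolding ps'_def using p0 nn fi[OF p] by simp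
  have C: "last ps' = q" unfolding ps'_def using pl nn fi[OF q] by (simp add: last_map)
  have D: "cs' ! i \<in> max_chains G X g \<and> ps' ! i \<in> osimplex (cs' ! i) \<and> ps' ! Suc i \<in> osimplex (cs' ! i)
     \<and> W_cell_dist G X g (cs ! i) (ps ! i) (ps ! Suc i) = O_cell_dist G X g (cs' ! i) (ps' ! i) (ps' ! Suc i)"
    if i: "i < length cs" for i
  proof -
    have Ci: "lin_fact G X g (cs ! i)" using cells i by blast
    define w where "w = wR (cs ! i)"
    have w: "w \<in> Words" "W_cell G (cs ! i) \<subseteq> PW w ` TS" using wR[OF Ci] unfolding w_def by auto
    obtain ts where ts: "ts \<in> TS" "ps ! i = PW w ts" using cells i w by blast
    obtain ts' where ts': "ts' \<in> TS" "ps ! Suc i = PW w ts'" using cells i w by blast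
    have c': "cs' ! i = Cw w" unfolding cs'_def w_def using i by simp
    have p1: "ps' ! i = PO w ts" unfolding ps'_def using i l ts finv_PW[OF w(1)] by simp
    have p2: "ps' ! Suc i = PO w ts'" unfolding ps'_def using i l ts' finv_PW[OF w(1)] by simp
    show ?thesis unfolding c' p1 p2 using Cw_max[OF w(1)] PO_osimplex[OF w(1)] ts ts'
      O_cell_dist_PO[OF w(1) ts(1) ts'(1)] W_cell_dist_PW[OF w(1) w(1) ts(1) ts'(1)] by simp
  qed
  have lc: "length cs' = length cs" unfolding cs'_def by simp
  have "len = (\<Sum>i < length cs. O_cell_dist G X g (cs' ! i) (ps' ! i) (ps' ! Suc i))"
    unfolding len by (rule sum.cong[OF refl]) (use D in blast)
  then have E: "len = (\<Sum>i < length cs'. O_cell_dist G X g (cs' ! i) (ps' ! i) (ps' ! Suc i))"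
    unfolding lc .
  have D': "\<forall>i < length cs'. cs' ! i \<in> max_chains G X g \<and> ps' ! i \<in> osimplex (cs' ! i) \<and> ps' ! Suc i \<in> osimplex (cs' ! i)"
    unfolding lc using D by blast
  show "len \<in> {len. \<exists>ps cs.
      length ps = Suc (length cs) \<and> ps ! 0 = p \<and> last ps = q \<and>
      (\<forall>i < length cs. cs ! i \<in> max_chains G X g \<and> ps ! i \<in> osimplex (cs ! i) \<and> ps ! Suc i \<in> osimplex (cs ! i)) \<and>
      len = (\<Sum>i < length cs. O_cell_dist G X g (cs ! i) (ps ! i) (ps ! Suc i))}"
    by (intro CollectI exI[of _ ps'] exI[of _ cs'] conjI A B C D' E)
qed

lemma main_iso: "isometric_spaces (O_points G X g) (O_dist G X g) (WFact G X g) (W_dist G X g)"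
proof -
  have bij: "bij_betw fmap (O_points G X g) (WFact G X g)"
    unfolding bij_betw_def using fmap_inj fmap_image by blast
  have "W_dist G X g (fmap p) (fmap q) = O_dist G X g p q" if "p \<in> O_points G X g" "q \<in> O_points G X g" for p q
    unfolding W_dist_def O_dist_def intrinsic_dist_def using dist_sets[OF that] by simp
  then show ?thesis unfolding isometric_spaces_def using bij by blast
qed

end

theorem proposition4p6:
  fixes G (structure) and X :: "'a set" and g :: 'a
  assumes "group G"
    and "X \<subseteq> carrier G"
    and "generate G X = carrier G"
    and "\<forall>x \<in> X. \<forall>h \<in> carrier G. h \<otimes> x \<otimes> inv h \<in> X"
    and "g \<in> Mon G X"
  shows "isometric_spaces (O_points G X g) (O_dist G X g) (WFact G X g) (W_dist G X g)"
proof -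
  have "wsetup_g G X g"
    unfolding wsetup_g_def wsetup_g_axioms_def wsetup_def wsetup_axioms_def using assms by blast
  then interpret wsetup_g G X g .
  show ?thesis by (rule main_iso)
qed

end
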